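(* For the Bochner Laplacian $\nabla^*\nabla$ on real $p$-forms, the following three identities hold, with $S=s-n/2$: $$Q^{(1)}=(S^2-\tfrac14)|\xi|^{n-2s}\binom np\big(\operatorname{tr}(H\Pi_\xi^\perp)\big)^2,$$ $$Q^{(2)}=(S-\tfrac12)|\xi|^{n-2s}\,4\binom{n-2}{p-1}\operatorname{tr}\big((H\Pi_\xi^\perp)^2\big)+(S-\tfrac12)|\xi|^{n-2s-4}\binom np\big(-2|\xi|^2|h\cdot\xi|^2+2(\xi\cdot h\cdot\xi)^2\big),$$ $$Q^{(3)}=(S-\tfrac12)|\xi|^{n-2s}\binom np\big(\operatorname{tr}(H\Pi_\xi^\perp)\big)^2+(S-\tfrac12)|\xi|^{n-2s-4}\binom np\big(4|\xi|^2|h\cdot\xi|^2-3(\xi\cdot h\cdot\xi)^2-|\xi|^2(\xi\cdot h\cdot\xi)(\operatorname{tr}h)\big).$$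
   Context: Fix a point $x$ of a Riemannian $n$-manifold $(M,g)$ and normal coordinates for $g$ at $x$, with $\partial_i=\partial/\partial x^i$. Trivialize real $p$-forms by the basis $dx^I$, where $I$ ranges over the $p$-subsets of $\{1,\dots,n\}$; operators then become $N\times N$ matrices, $N=\binom np$. Let $h$ be a smooth symmetric 2-tensor, $\Delta$ the operator under consideration, and $\Delta'=\frac{d}{d\alpha}|_{0}\Delta(g+\alpha h)$. At $x$, modulo terms $(\partial^\alpha h_{ij})\partial^\beta$ of total degree $|\alpha|+|\beta|<2$, write $$\Delta'\sim\sum_{i,j}h_{ij}\partial^2_{ij}\,\mathrm{Id}+\sum_{i,j,k,\ell}\big(A^{ij}_{k\ell}(\partial_kh_{ij})\partial_\ell+B^{ij}_{k\ell}(\partial^2_{k\ell}h_{ij})\big),$$ with $N\times N$ real matrices $A^{ij}_{k\ell}$ and $B^{ij}_{k\ell}$. For $\xi\in\mathbb R^n\setminus\{0\}$, with $h=(h_{ij}(x))$ regarded as a symmetric matrix, set $$h\cdot\xi=\Big(\sum_jh_{ij}\xi_j\Big)_i,\quad \xi\cdot h\cdot\xi=\sum h_{ij}\xi_i\xi_j,\quad |h|^2=\sum h_{ij}^2,\quad \operatorname{tr}h=\sum h_{ii}.$$ Let $H$ be the matrix $h$ and $\Pi_\xi^\perp=I-|\xi|^{-2}\xi\xi^T$, so that $$\operatorname{tr}((H\Pi_\xi^\perp)^2)=|h|^2-2|\xi|^{-2}|h\cdot\xi|^2+|\xi|^{-4}(\xi\cdot h\cdot\xi)^2,\qquad \operatorname{tr}(H\Pi_\xi^\perp)=\operatorname{tr}h-|\xi|^{-2}\xi\cdot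 h\cdot\xi.$$ The coefficient symbols are the $N\times N$ matrices $$\sigma^{(2)}=(\xi\cdot h\cdot\xi)\mathrm{Id},\qquad \sigma^{(1)}=\sum A^{ij}_{k\ell}\xi_k\xi_\ell h_{ij},\qquad \sigma^{(0)}=\sum B^{ij}_{k\ell}\xi_k\xi_\ell h_{ij},$$ and the coefficient components are $\sigma^{(1)}_{k\ell}=\sum_{i,j}A^{ij}_{k\ell}h_{ij}$. With $S=s-n/2$, define $$Q^{(1)}=(S^2-\tfrac14)|\xi|^{n-2s-4}\operatorname{trace}\big((\sigma^{(2)}-2\sigma^{(1)}+4\sigma^{(0)})^2\big),$$ $$Q^{(2)}=(2S-1)|\xi|^{n-2s-4}\operatorname{trace}\Big((\sigma^{(1)})^2-|\xi|^2\sum_j\Big(\sum_i\xi_i\sigma^{(1)}_{ij}\Big)^2\Big),$$ $$\begin{aligned}Q^{(3)}=(2S-1)|\xi|^{n-2s-4}\Big(&(\xi\cdot h\cdot\xi)\operatorname{trace}(-\sigma^{(1)}-2\sigma^{(0)})+|\xi|^2(\operatorname{tr}h)\operatorname{trace}(-\sigma^{(1)}+2\sigma^{(0)})\\&+|\xi|^2\operatorname{trace}\sum_{i,j}\sigma^{(1)}_{ij}\big(\xi_i(h\cdot\xi)_j+\xi_j(h\cdot\xi)_i\big)\Big).\end{aligned}$$ Here "trace" is the trace of $N\times N$ matrices. *)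

theory Defs
  imports "HOL-Analysis.Analysis"
begin

text \<open>
  Coordinates are indexed by a finite linearly ordered type 'n, so n = CARD('n).
  All objects are represented by their 2-jets at the fixed point x (in normal coordinates):
  this is all that enters the coefficients A and B of the linearised operator.
  A real p-form is stored by its coefficients on the basis dx^I, I a p-subset of 'n
  (written with increasing indices); N x N matrices are functions 'n set => 'n set => real.
\<close>

type_synonym 'n form = "'n set \<Rightarrow> real"
type_synonym 'n fmat = "'n set \<Rightarrow> 'n set \<Rightarrow> real"

definition psubsets :: "nat \<Rightarrow> 'n::finite set set" where
  "psubsets p = {I. card I = p}"

definition mtrace :: "nat \<Rightarrow> ('n::finite) fmat \<Rightarrow> real" where
  "mtrace p M = (\<Sum>I\<in>psubsets p. M I I)"

definition mmult :: "nat \<Rightarrow> ('n::finite) fmat \<Rightarrow> 'n fmat \<Rightarrow> 'n fmat" where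
  "mmult p M1 M2 = (\<lambda>I J. \<Sum>K\<in>psubsets p. M1 I K * M2 K J)"

definition mId :: "'n fmat" where
  "mId = (\<lambda>I J. if I = J then 1 else 0)"

definition inversions :: "'n::linorder list \<Rightarrow> nat" where
  "inversions xs = card {(a, b). a < b \<and> b < length xs \<and> xs ! b < xs ! a}"

text \<open>component omega_{i_1 ... i_p} of the alternating tensor of the form u = sum_I u_I dx^I\<close>
definition comp :: "'n::linorder form \<Rightarrow> 'n list \<Rightarrow> real" where
  "comp u xs = (if distinct xs then (-1) ^ inversions xs * u (set xs) else 0)"

definition minv :: "('n::finite \<Rightarrow> 'n \<Rightarrow> real) \<Rightarrow> 'n \<Rightarrow> 'n \<Rightarrow> real" where
  "minv g = (\<lambda>i j. matrix_inv (\<chi> a b. g a b) $ i $ j)"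

text \<open>
  Bochner Laplacian nabla^* nabla on p-forms at the point, in coordinates, as a function of the
  2-jet of the metric (g0 i j = g_ij, g1 k i j = d_k g_ij, g2 e k i j = d_e d_k g_ij)
  and of the 2-jet of the form u (u0, u1 k = d_k u, u2 a b = d_a d_b u).
  Christoffel symbols: Gamma c a b = Gamma^c_{ab}.
  (nabla u)_{b I} = d_b u_I - sum_r Gamma^c_{b i_r} u_{..c..};
  (nabla^2 u)_{a b I} = d_a (nabla u)_{b I} - Gamma^c_{ab} (nabla u)_{c I}
                        - sum_r Gamma^c_{a i_r} (nabla u)_{b ..c..};
  nabla^* nabla u = - g^{ab} (nabla^2 u)_{a b}.
\<close>
definition bochner ::
  "nat \<Rightarrow> ('n::{finite,linorder} \<Rightarrow> 'n \<Rightarrow> real) \<Rightarrow> ('n \<Rightarrow> 'n \<Rightarrow> 'n \<Rightarrow> real)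
     \<Rightarrow> ('n \<Rightarrow> 'n \<Rightarrow> 'n \<Rightarrow> 'n \<Rightarrow> real)
     \<Rightarrow> 'n form \<Rightarrow> ('n \<Rightarrow> 'n form) \<Rightarrow> ('n \<Rightarrow> 'n \<Rightarrow> 'n form) \<Rightarrow> 'n form" where
  "bochner p g0 g1 g2 u0 u1 u2 =
    (let gi = minv g0;
         Gam = (\<lambda>c a b. (1/2) * (\<Sum>d\<in>UNIV. gi c d * (g1 a d b + g1 b d a - g1 d a b)));
         dgi = (\<lambda>e c d. - (\<Sum>f\<in>UNIV. \<Sum>k\<in>UNIV. gi c f * g1 e f k * gi k d));
         dGam = (\<lambda>e c a b. (1/2) * (\<Sum>d\<in>UNIV.
                    dgi e c d * (g1 a d b + g1 b d a - g1 d a b)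
                    + gi c d * (g2 e a d b + g2 e b d a - g2 e d a b)));
         nab = (\<lambda>b xs. comp (u1 b) xs
                  - (\<Sum>r<p. \<Sum>c\<in>UNIV. Gam c b (xs ! r) * comp u0 (xs[r := c])));
         dnab = (\<lambda>a b xs. comp (u2 a b) xs
                  - (\<Sum>r<p. \<Sum>c\<in>UNIV. dGam a c b (xs ! r) * comp u0 (xs[r := c])
                                      + Gam c b (xs ! r) * comp (u1 a) (xs[r := c])));
         nab2 = (\<lambda>a b xs. dnab a b xs - (\<Sum>c\<in>UNIV. Gam c a b * nab c xs)
                  - (\<Sum>r<p. \<Sum>c\<in>UNIV. Gam c a (xs ! r) * nab b (xs[r := c])))
     in (\<lambda>I. - (\<Sum>a\<in>UNIV. \<Sum>b\<in>UNIV. gi a b * nab2 a b (sorted_list_of_set I))))"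

definition bochner_var ::
  "nat \<Rightarrow> ('n::{finite,linorder} \<Rightarrow> 'n \<Rightarrow> real) \<Rightarrow> ('n \<Rightarrow> 'n \<Rightarrow> 'n \<Rightarrow> real)
     \<Rightarrow> ('n \<Rightarrow> 'n \<Rightarrow> 'n \<Rightarrow> 'n \<Rightarrow> real)
     \<Rightarrow> ('n \<Rightarrow> 'n \<Rightarrow> real) \<Rightarrow> ('n \<Rightarrow> 'n \<Rightarrow> 'n \<Rightarrow> real)
     \<Rightarrow> ('n \<Rightarrow> 'n \<Rightarrow> 'n \<Rightarrow> 'n \<Rightarrow> real)
     \<Rightarrow> 'n form \<Rightarrow> ('n \<Rightarrow> 'n form) \<Rightarrow> ('n \<Rightarrow> 'n \<Rightarrow> 'n form) \<Rightarrow> 'n form" where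
  "bochner_var p g0 g1 g2 h0 h1 h2 u0 u1 u2 =
    (\<lambda>I. deriv (\<lambda>\<alpha>. bochner p (\<lambda>i j. g0 i j + \<alpha> * h0 i j) (\<lambda>k i j. g1 k i j + \<alpha> * h1 k i j)
                        (\<lambda>e k i j. g2 e k i j + \<alpha> * h2 e k i j) u0 u1 u2 I) 0)"

text \<open>
  2-jet of the metric in normal coordinates at x: g_ij(x) = delta_ij, d g(x) = 0, and the
  second derivatives G2 (symmetric in both index pairs) satisfy the normal-coordinate condition
  sum_{j,k,l} d_k d_l g_ij y^j y^k y^l = 0 (from g_ij(y) y^j = y^i).
\<close>
definition normal_2jet :: "('n::finite \<Rightarrow> 'n \<Rightarrow> 'n \<Rightarrow> 'n \<Rightarrow> real) \<Rightarrow> bool" where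
  "normal_2jet G2 \<longleftrightarrow>
     (\<forall>e k i j. G2 e k i j = G2 k e i j \<and> G2 e k i j = G2 e k j i) \<and>
     (\<forall>y i. (\<Sum>j\<in>UNIV. \<Sum>k\<in>UNIV. \<Sum>l\<in>UNIV. G2 k l i j * y j * y k * y l) = 0)"

definition delta :: "'n \<Rightarrow> 'n \<Rightarrow> real" where
  "delta i j = (if i = j then 1 else 0)"

definition unitform :: "'n set \<Rightarrow> 'n form" where
  "unitform J = (\<lambda>K. if K = J then 1 else 0)"

text \<open>
  Coefficient components sigma1_{kl} = sum_{ij} A^{ij}_{kl} h_ij: the matrix (column J) is the value
  of Delta' on a jet where only d_k h = H and only d_l u = dx^J are nonzero (so all lower-order terms
  and the other degree-two terms vanish).
\<close>
definition sigma1c :: "nat \<Rightarrow> ('n::{finite,linorder} \<Rightarrow> 'n \<Rightarrow> 'n \<Rightarrow> 'n \<Rightarrow> real)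
    \<Rightarrow> ('n \<Rightarrow> 'n \<Rightarrow> real) \<Rightarrow> 'n \<Rightarrow> 'n \<Rightarrow> 'n fmat" where
  "sigma1c p G2 H k l = (\<lambda>I J.
     bochner_var p delta (\<lambda>_ _ _. 0) G2
       (\<lambda>_ _. 0) (\<lambda>m i j. if m = k then H i j else 0) (\<lambda>_ _ _ _. 0)
       (\<lambda>_. 0) (\<lambda>m. if m = l then unitform J else (\<lambda>_. 0)) (\<lambda>_ _ _. 0) I)"

definition sigma1 :: "nat \<Rightarrow> ('n::{finite,linorder} \<Rightarrow> 'n \<Rightarrow> 'n \<Rightarrow> 'n \<Rightarrow> real)
    \<Rightarrow> ('n \<Rightarrow> 'n \<Rightarrow> real) \<Rightarrow> ('n \<Rightarrow> real) \<Rightarrow> 'n fmat" where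
  "sigma1 p G2 H \<xi> = (\<lambda>I J. \<Sum>k\<in>UNIV. \<Sum>l\<in>UNIV. \<xi> k * \<xi> l * sigma1c p G2 H k l I J)"

text \<open>
  sigma0 = sum B^{ij}_{kl} xi_k xi_l h_ij: value of Delta' on a jet where only
  d_k d_l h = xi_k xi_l H and only u = dx^J are nonzero.
\<close>
definition sigma0 :: "nat \<Rightarrow> ('n::{finite,linorder} \<Rightarrow> 'n \<Rightarrow> 'n \<Rightarrow> 'n \<Rightarrow> real)
    \<Rightarrow> ('n \<Rightarrow> 'n \<Rightarrow> real) \<Rightarrow> ('n \<Rightarrow> real) \<Rightarrow> 'n fmat" where
  "sigma0 p G2 H \<xi> = (\<lambda>I J.
     bochner_var p delta (\<lambda>_ _ _. 0) G2
       (\<lambda>_ _. 0) (\<lambda>_ _ _. 0) (\<lambda>k l i j. \<xi> k * \<xi> l * H i j)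
       (unitform J) (\<lambda>_. (\<lambda>_. 0)) (\<lambda>_ _ _. 0) I)"

definition xhx :: "('n::finite \<Rightarrow> 'n \<Rightarrow> real) \<Rightarrow> ('n \<Rightarrow> real) \<Rightarrow> real" where
  "xhx H \<xi> = (\<Sum>i\<in>UNIV. \<Sum>j\<in>UNIV. H i j * \<xi> i * \<xi> j)"

definition hdot :: "('n::finite \<Rightarrow> 'n \<Rightarrow> real) \<Rightarrow> ('n \<Rightarrow> real) \<Rightarrow> 'n \<Rightarrow> real" where
  "hdot H \<xi> = (\<lambda>i. \<Sum>j\<in>UNIV. H i j * \<xi> j)"

definition nsq :: "('n::finite \<Rightarrow> real) \<Rightarrow> real" where
  "nsq \<xi> = (\<Sum>i\<in>UNIV. \<xi> i ^ 2)"

definition vnorm :: "('n::finite \<Rightarrow> real) \<Rightarrow> real" where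
  "vnorm \<xi> = sqrt (nsq \<xi>)"

definition mtr :: "('n::finite \<Rightarrow> 'n \<Rightarrow> real) \<Rightarrow> real" where
  "mtr H = (\<Sum>i\<in>UNIV. H i i)"

definition smul :: "('n::finite \<Rightarrow> 'n \<Rightarrow> real) \<Rightarrow> ('n \<Rightarrow> 'n \<Rightarrow> real) \<Rightarrow> 'n \<Rightarrow> 'n \<Rightarrow> real" where
  "smul X Y = (\<lambda>i j. \<Sum>k\<in>UNIV. X i k * Y k j)"

definition proj_perp :: "('n::finite \<Rightarrow> real) \<Rightarrow> 'n \<Rightarrow> 'n \<Rightarrow> real" where
  "proj_perp \<xi> = (\<lambda>i j. delta i j - \<xi> i * \<xi> j / nsq \<xi>)"

definition binom_int :: "int \<Rightarrow> int \<Rightarrow> real" where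
  "binom_int a b = (if b < 0 then 0 else (of_int a :: real) gchoose (nat b))"

definition fadd :: "'n fmat \<Rightarrow> 'n fmat \<Rightarrow> 'n fmat" where
  "fadd M1 M2 = (\<lambda>I J. M1 I J + M2 I J)"

definition fscale :: "real \<Rightarrow> 'n fmat \<Rightarrow> 'n fmat" where
  "fscale c M = (\<lambda>I J. c * M I J)"

definition sigma2 :: "('n::finite \<Rightarrow> 'n \<Rightarrow> real) \<Rightarrow> ('n \<Rightarrow> real) \<Rightarrow> 'n fmat" where
  "sigma2 H \<xi> = fscale (xhx H \<xi>) mId"

definition Q1 :: "nat \<Rightarrow> real \<Rightarrow> ('n::{finite,linorder} \<Rightarrow> 'n \<Rightarrow> 'n \<Rightarrow> 'n \<Rightarrow> real)
    \<Rightarrow> ('n \<Rightarrow> 'n \<Rightarrow> real) \<Rightarrow> ('n \<Rightarrow> real) \<Rightarrow> real" where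
  "Q1 p s G2 H \<xi> =
    (let S = s - real CARD('n) / 2;
         X = fadd (fadd (sigma2 H \<xi>) (fscale (-2) (sigma1 p G2 H \<xi>))) (fscale 4 (sigma0 p G2 H \<xi>))
     in (S^2 - 1/4) * vnorm \<xi> powr (real CARD('n) - 2 * s - 4) * mtrace p (mmult p X X))"

definition Q2 :: "nat \<Rightarrow> real \<Rightarrow> ('n::{finite,linorder} \<Rightarrow> 'n \<Rightarrow> 'n \<Rightarrow> 'n \<Rightarrow> real)
    \<Rightarrow> ('n \<Rightarrow> 'n \<Rightarrow> real) \<Rightarrow> ('n \<Rightarrow> real) \<Rightarrow> real" where
  "Q2 p s G2 H \<xi> =
    (let S = s - real CARD('n) / 2;
         s1 = sigma1 p G2 H \<xi>;
         V = (\<lambda>j. (\<lambda>I J. \<Sum>i\<in>UNIV. \<xi> i * sigma1c p G2 H i j I J));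
         M = (\<lambda>I J. \<Sum>j\<in>UNIV. mmult p (V j) (V j) I J)
     in (2 * S - 1) * vnorm \<xi> powr (real CARD('n) - 2 * s - 4)
          * mtrace p (fadd (mmult p s1 s1) (fscale (- nsq \<xi>) M)))"

definition Q3 :: "nat \<Rightarrow> real \<Rightarrow> ('n::{finite,linorder} \<Rightarrow> 'n \<Rightarrow> 'n \<Rightarrow> 'n \<Rightarrow> real)
    \<Rightarrow> ('n \<Rightarrow> 'n \<Rightarrow> real) \<Rightarrow> ('n \<Rightarrow> real) \<Rightarrow> real" where
  "Q3 p s G2 H \<xi> =
    (let S = s - real CARD('n) / 2;
         s1 = sigma1 p G2 H \<xi>;
         s0 = sigma0 p G2 H \<xi>;
         hx = hdot H \<xi>;
         T = (\<lambda>I J. \<Sum>i\<in>UNIV. \<Sum>j\<in>UNIV.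
                 sigma1c p G2 H i j I J * (\<xi> i * hx j + \<xi> j * hx i))
     in (2 * S - 1) * vnorm \<xi> powr (real CARD('n) - 2 * s - 4)
        * (xhx H \<xi> * mtrace p (fadd (fscale (-1) s1) (fscale (-2) s0))
           + nsq \<xi> * mtr H * mtrace p (fadd (fscale (-1) s1) (fscale 2 s0))
           + nsq \<xi> * mtrace p T))"

end

theory Submission
  imports Defs
begin

lemma minv_delta: "minv (delta :: 'n::finite \<Rightarrow> 'n \<Rightarrow> real) = delta"
proof -
  have m: "(\<chi> a b. delta a b) = (mat 1 :: real^'n^'n)"
    by (simp add: mat_def delta_def vec_eq_iff)
  have "matrix_inv (mat 1 :: real^'n^'n) = mat 1"
  proof -
    have ex: "\<exists>A'::real^'n^'n. mat 1 ** A' = mat 1 \<and> A' ** mat 1 = mat 1" by (rule exI[of _ "mat 1"]) simp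
    show ?thesis unfolding matrix_inv_def using someI_ex[OF ex] by (simp add: matrix_mul_lid)
  qed
  then show ?thesis unfolding minv_def m by (auto simp: mat_def delta_def fun_eq_iff)
qed

lemma comp_zero[simp]: "comp (\<lambda>_. 0) xs = 0"
  by (simp add: Defs.comp_def)

lemma sum_delta1[simp]: "(\<Sum>d\<in>UNIV. delta (c::'n::finite) d * f d) = (f c :: real)"
proof -
  have "\<And>d. delta c d * f d = (if c = d then f d else 0)" by (simp add: delta_def)
  then show ?thesis by (simp add: sum.delta')
qed

definition Gm :: "('n \<Rightarrow> 'n \<Rightarrow> 'n \<Rightarrow> real) \<Rightarrow> 'n \<Rightarrow> 'n \<Rightarrow> 'n \<Rightarrow> real" where
  "Gm g1 c a b = (g1 a c b + g1 b c a - g1 c a b) / 2"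

lemma bochner_u0:
  fixes g1 :: "'n::{finite,linorder} \<Rightarrow> 'n \<Rightarrow> 'n \<Rightarrow> real" and I :: "'n set"
  defines "xs \<equiv> sorted_list_of_set I"
  shows "bochner p delta g1 g2 (\<lambda>_. 0) u1 (\<lambda>_ _ _. 0) I =
    2 * (\<Sum>a\<in>UNIV. \<Sum>r<p. \<Sum>c\<in>UNIV. Gm g1 c a (xs!r) * comp (u1 a) (xs[r:=c]))
    + (\<Sum>a\<in>UNIV. \<Sum>c\<in>UNIV. Gm g1 c a a * comp (u1 c) xs)"
  unfolding bochner_def Let_def minv_delta xs_def
  by (simp add: Gm_def sum_negf sum.distrib sum_subtractf sum_distrib_left)
lemma inv_upd:
  fixes xs :: "'a::linorder list"
  assumes s: "sorted_wrt (<) xs" and r: "r < length xs" and c: "c \<notin> set xs"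
  shows "inversions (xs[r:=c]) = card {k \<in> set xs. (xs!r < k \<and> k < c) \<or> (c < k \<and> k < xs!r)}"
proof -
  let ?n = "length xs"
  have lt: "xs!i < xs!j \<longleftrightarrow> i < j" if "i < ?n" "j < ?n" for i j
    using sorted_wrt_nth_less[OF s, of i j] sorted_wrt_nth_less[OF s, of j i] that
    by (metis less_asym' linorder_neqE_nat)
  have dist: "distinct xs" using s strict_sorted_iff by blast
  define A where "A = {a. a < r \<and> c < xs!a}"
  define B where "B = {b. r < b \<and> b < ?n \<and> xs!b < c}"
  have upd: "xs[r:=c] ! i = (if i = r then c else xs!i)" if "i < ?n" for i
    using that r by simp
  have S: "{(a, b). a < b \<and> b < length (xs[r:=c]) \<and> xs[r:=c] ! b < xs[r:=c] ! a}
      = (\<lambda>a. (a,r)) ` A \<union> (\<lambda>b. (r,b)) ` B"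
  proof (rule set_eqI, clarify, rule iffI)
    fix a b assume "(a, b) \<in> {(a, b). a < b \<and> b < length (xs[r:=c]) \<and> xs[r:=c] ! b < xs[r:=c] ! a}"
    then have ab: "a < b" "b < ?n" "xs[r:=c] ! b < xs[r:=c] ! a" by auto
    show "(a, b) \<in> (\<lambda>a. (a,r)) ` A \<union> (\<lambda>b. (r,b)) ` B"
    proof (cases "b = r")
      case True
      then show ?thesis using ab upd[of a] upd[of b] by (auto simp: A_def)
    next
      case False
      show ?thesis
      proof (cases "a = r")
        case True
        then show ?thesis using ab upd[of a] upd[of b] False by (auto simp: B_def)
      next
        case False2: False
        then have "xs!b < xs!a" using ab upd[of a] upd[of b] False by auto
        then show ?thesis using lt[of b a] ab by auto
      qed
    qed
  next
    fix a b assume "(a, b) \<in> (\<lambda>a. (a,r)) ` A \<union> (\<lambda>b. (r,b)) ` B"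
    then show "(a, b) \<in> {(a, b). a < b \<and> b < length (xs[r:=c]) \<and> xs[r:=c] ! b < xs[r:=c] ! a}"
      using r upd by (auto simp: A_def B_def)
  qed
  have disj: "(\<lambda>a. (a,r)) ` A \<inter> (\<lambda>b. (r,b)) ` B = {}" by (auto simp: A_def B_def)
  have fA: "finite A" by (auto simp: A_def)
  have fB: "finite B" by (auto simp: B_def)
  have cA: "card ((\<lambda>a. (a,r)) ` A) = card A" by (rule card_image) (auto simp: inj_on_def)
  have cB: "card ((\<lambda>b. (r,b)) ` B) = card B" by (rule card_image) (auto simp: inj_on_def)
  have iA: "card (nth xs ` A) = card A"
    by (rule card_image, rule inj_on_nth[OF dist]) (use r in \<open>auto simp: A_def\<close>)
  have iB: "card (nth xs ` B) = card B"
    by (rule card_image, rule inj_on_nth[OF dist]) (auto simp: B_def)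
  have eA: "nth xs ` A = {k \<in> set xs. c < k \<and> k < xs!r}"
  proof (rule set_eqI, rule iffI)
    fix k assume "k \<in> nth xs ` A"
    then obtain a where "a \<in> A" "k = xs!a" by auto
    then show "k \<in> {k \<in> set xs. c < k \<and> k < xs!r}" using lt[of a r] r by (auto simp: A_def)
  next
    fix k assume "k \<in> {k \<in> set xs. c < k \<and> k < xs!r}"
    then obtain a where "a < ?n" "k = xs!a" "c < k" "k < xs!r" by (auto simp: in_set_conv_nth)
    then show "k \<in> nth xs ` A" using lt[of a r] r by (auto simp: A_def)
  qed
  have eB: "nth xs ` B = {k \<in> set xs. xs!r < k \<and> k < c}"
  proof (rule set_eqI, rule iffI)
    fix k assume "k \<in> nth xs ` B"
    then obtain a where "a \<in> B" "k = xs!a" by auto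
    then show "k \<in> {k \<in> set xs. xs!r < k \<and> k < c}" using lt[of r a] r by (auto simp: B_def)
  next
    fix k assume "k \<in> {k \<in> set xs. xs!r < k \<and> k < c}"
    then obtain a where "a < ?n" "k = xs!a" "xs!r < k" "k < c" by (auto simp: in_set_conv_nth)
    then show "k \<in> nth xs ` B" using lt[of r a] r by (auto simp: B_def)
  qed
  have U: "{k \<in> set xs. (xs!r < k \<and> k < c) \<or> (c < k \<and> k < xs!r)}
      = {k \<in> set xs. xs!r < k \<and> k < c} \<union> {k \<in> set xs. c < k \<and> k < xs!r}" by auto
  have "card {k \<in> set xs. (xs!r < k \<and> k < c) \<or> (c < k \<and> k < xs!r)} = card B + card A"
  proof -
    have "card ({k \<in> set xs. xs!r < k \<and> k < c} \<union> {k \<in> set xs. c < k \<and> k < xs!r})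
        = card {k \<in> set xs. xs!r < k \<and> k < c} + card {k \<in> set xs. c < k \<and> k < xs!r}"
      by (rule card_Un_disjoint) auto
    then show ?thesis unfolding U by (simp add: eA[symmetric] eB[symmetric] iA iB)
  qed
  moreover have "inversions (xs[r:=c]) = card A + card B"
    unfolding inversions_def S using fA fB disj cA cB by (simp add: card_Un_disjoint)
  ultimately show ?thesis by simp
qed


lemma inversions_sorted: "sorted_wrt (<) xs \<Longrightarrow> inversions xs = 0"
  unfolding inversions_def
  using sorted_wrt_nth_less[of "(<)" xs] by (force simp: card_eq_0_iff)

definition nbt :: "'n::linorder set \<Rightarrow> 'n \<Rightarrow> 'n \<Rightarrow> nat" where
  "nbt K b c = card {k\<in>K. (b < k \<and> k < c) \<or> (c < k \<and> k < b)}"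

lemma sl_facts:
  fixes I :: "'n::{finite,linorder} set"
  shows "set (sorted_list_of_set I) = I" "length (sorted_list_of_set I) = card I"
    "sorted_wrt (<) (sorted_list_of_set I)" "distinct (sorted_list_of_set I)"
  by (auto simp: strict_sorted_list_of_set)

lemma comp_upd:
  fixes I :: "'n::{finite,linorder} set"
  assumes r: "r < card I"
  shows "comp (unitform J) ((sorted_list_of_set I)[r:=c]) =
    (if c = sorted_list_of_set I ! r then (if J = I then 1 else 0)
     else if c \<in> I then 0
     else if J = insert c (I - {sorted_list_of_set I ! r}) then (-1) ^ nbt I (sorted_list_of_set I ! r) c
     else 0)"
proof -
  define xs where "xs = sorted_list_of_set I"
  note f = sl_facts[of I, folded xs_def]
  have r': "r < length xs" using r f by simp
  have main: "comp (unitform J) (xs[r:=c]) =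
    (if c = xs ! r then (if J = I then 1 else 0)
     else if c \<in> I then 0
     else if J = insert c (I - {xs ! r}) then (-1) ^ nbt I (xs ! r) c
     else 0)"
  proof (cases "c = xs!r")
    case True
    then have e: "xs[r:=c] = xs" by simp
    have "comp (unitform J) xs = (if J = I then 1 else 0)"
      using f inversions_sorted[OF f(3)] unfolding Defs.comp_def unitform_def by auto
    then show ?thesis using True e by simp
  next
    case False
    show ?thesis
    proof (cases "c \<in> I")
      case True
      have st: "set (xs[r:=c]) = insert c (I - {xs!r})" using set_update_distinct[OF f(4) r'] f by simp
      also have "\<dots> = I - {xs!r}" using True False by auto
      finally have "card (set (xs[r:=c])) < length (xs[r:=c])"
        using r' f nth_mem[OF r'] by (simp add: card_Diff1_less)
      then have "\<not> distinct (xs[r:=c])" using distinct_card by fastforce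
      then have "comp (unitform J) (xs[r:=c]) = 0" unfolding Defs.comp_def by simp
      then show ?thesis using True False by simp
    next
      case cI: False
      have d: "distinct (xs[r:=c])" using distinct_list_update[OF f(4)] cI f by auto
      have st: "set (xs[r:=c]) = insert c (I - {xs!r})" using set_update_distinct[OF f(4) r'] f by simp
      have iv: "inversions (xs[r:=c]) = nbt I (xs!r) c"
        using inv_upd[OF f(3) r'] cI f by (simp add: nbt_def)
      have "comp (unitform J) (xs[r:=c]) = (if J = insert c (I - {xs!r}) then (-1) ^ nbt I (xs!r) c else 0)"
        unfolding Defs.comp_def unitform_def using d st iv by auto
      then show ?thesis using False cI by simp
    qed
  qed
  then show ?thesis by (simp add: xs_def)
qed


definition Dm :: "nat \<Rightarrow> ('n::{finite,linorder} \<Rightarrow> 'n \<Rightarrow> real) \<Rightarrow> 'n fmat" where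
  "Dm p A = (\<lambda>I J. \<Sum>r<p. \<Sum>c\<in>UNIV. A c (sorted_list_of_set I ! r) *
      comp (unitform J) ((sorted_list_of_set I)[r:=c]))"

lemma sum_split_c:
  fixes I :: "'n::finite set"
  assumes "b \<in> I"
  shows "(\<Sum>c\<in>UNIV. (if c = b then X else if c \<in> I then 0 else Y c)) = X + (\<Sum>c\<in>-I. Y c)"
proof -
  have U: "(UNIV::'n set) = I \<union> (-I)" by auto
  have "(\<Sum>c\<in>UNIV. (if c = b then X else if c \<in> I then 0 else Y c))
      = (\<Sum>c\<in>I. (if c = b then X else if c \<in> I then 0 else Y c)) + (\<Sum>c\<in>-I. (if c = b then X else if c \<in> I then 0 else Y c))"
    by (subst U, rule sum.union_disjoint) auto
  also have "(\<Sum>c\<in>I. (if c = b then X else if c \<in> I then 0 else Y c)) = (\<Sum>c\<in>I. if c = b then X else 0)"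
    by (rule sum.cong) auto
  also have "\<dots> = X" using assms by simp
  also have "(\<Sum>c\<in>-I. (if c = b then X else if c \<in> I then 0 else Y c)) = (\<Sum>c\<in>-I. Y c)"
    using assms by (intro sum.cong) auto
  finally show ?thesis .
qed

lemma sum_sorted_nth:
  fixes I :: "'n::{finite,linorder} set"
  assumes "card I = p"
  shows "(\<Sum>r<p. F (sorted_list_of_set I ! r)) = (\<Sum>b\<in>I. F b)"
proof -
  define xs where "xs = sorted_list_of_set I"
  note f = sl_facts[of I, folded xs_def]
  have "(\<Sum>b\<in>I. F b) = (\<Sum>b\<in>set xs. F b)" using f by simp
  also have "\<dots> = sum_list (map F xs)" using f(4) by (rule sum.distinct_set_conv_list)
  also have "\<dots> = (\<Sum>r<length xs. F (xs ! r))"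
    by (simp add: sum_list_sum_nth atLeast0LessThan)
  finally show ?thesis using f assms by (simp add: xs_def)
qed

lemma if_mult_helper:
  "(a::real) * (if P1 then (if P2 then 1 else 0) else if P3 then 0 else if P4 then s else 0)
   = (if P1 then (if P2 then a else 0) else if P3 then 0 else if P4 then a * s else 0)"
  by simp

lemma Dm_entry:
  fixes I :: "'n::{finite,linorder} set"
  assumes cI: "card I = p"
  shows "Dm p A I J = (if J = I then (\<Sum>b\<in>I. A b b) else 0)
    + (\<Sum>b\<in>I. \<Sum>c\<in>-I. if J = insert c (I - {b}) then A c b * (-1) ^ nbt I b c else 0)"
proof -
  define xs where "xs = sorted_list_of_set I"
  note f = sl_facts[of I, folded xs_def]
  define F where "F b = (if J = I then A b b else 0)
      + (\<Sum>c\<in>-I. if J = insert c (I - {b}) then A c b * (-1) ^ nbt I b c else 0)" for b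
  have step: "(\<Sum>c\<in>UNIV. A c (xs ! r) * comp (unitform J) (xs[r:=c])) = F (xs ! r)" if r: "r < p" for r
  proof -
    have rI: "xs ! r \<in> I" using nth_mem[of r xs] r f cI by simp
    have "(\<Sum>c\<in>UNIV. A c (xs ! r) * comp (unitform J) (xs[r:=c]))
      = (\<Sum>c\<in>UNIV. (if c = xs ! r then (if J = I then A (xs!r) (xs!r) else 0) else if c \<in> I then 0
          else (if J = insert c (I - {xs!r}) then A c (xs!r) * (-1) ^ nbt I (xs!r) c else 0)))"
    proof (rule sum.cong[OF refl])
      fix c
      show "A c (xs ! r) * comp (unitform J) (xs[r:=c]) = (if c = xs ! r then (if J = I then A (xs!r) (xs!r) else 0) else if c \<in> I then 0
          else (if J = insert c (I - {xs!r}) then A c (xs!r) * (-1) ^ nbt I (xs!r) c else 0))"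
        unfolding xs_def comp_upd[of r I J c, OF r[folded cI]] if_mult_helper
        by (cases "c = sorted_list_of_set I ! r") simp_all
    qed
    also have "\<dots> = F (xs ! r)" unfolding F_def by (rule sum_split_c[OF rI])
    finally show ?thesis .
  qed
  have "Dm p A I J = (\<Sum>r<p. F (xs ! r))" unfolding Dm_def xs_def[symmetric] using step by simp
  also have "\<dots> = (\<Sum>b\<in>I. F b)" unfolding xs_def by (rule sum_sorted_nth[OF cI])
  also have "\<dots> = (if J = I then (\<Sum>b\<in>I. A b b) else 0)
    + (\<Sum>b\<in>I. \<Sum>c\<in>-I. if J = insert c (I - {b}) then A c b * (-1) ^ nbt I b c else 0)"
    unfolding F_def sum.distrib by (simp add: sum.If_cases)
  finally show ?thesis .
qed


definition dg :: "('n \<Rightarrow> 'n \<Rightarrow> real) \<Rightarrow> 'n set \<Rightarrow> real" where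
  "dg A I = (\<Sum>b\<in>I. A b b)"

definition Off :: "('n::linorder \<Rightarrow> 'n \<Rightarrow> real) \<Rightarrow> 'n set \<Rightarrow> 'n set \<Rightarrow> real" where
  "Off A I J = (\<Sum>b\<in>I. \<Sum>c\<in>-I. if J = insert c (I - {b}) then A c b * (-1) ^ nbt I b c else 0)"

lemma Dm_entry':
  fixes I :: "'n::{finite,linorder} set"
  assumes "I \<in> psubsets p"
  shows "Dm p A I J = (if J = I then dg A I else 0) + Off A I J"
  using Dm_entry[of I p A J] assms by (simp add: psubsets_def dg_def Off_def)

lemma Off_diag: "Off A I I = 0"
proof -
  have "\<And>b c. c \<in> -I \<Longrightarrow> I \<noteq> insert c (I - {b})" by auto
  then show ?thesis unfolding Off_def by (intro sum.neutral ballI) auto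
qed

lemma finite_ps: "finite (psubsets p :: 'n::finite set set)" by simp

lemma mtrace_Dm:
  "mtrace p (Dm p A) = (\<Sum>I\<in>psubsets p. dg A (I::'n::{finite,linorder} set))"
  unfolding mtrace_def by (rule sum.cong[OF refl]) (simp add: Dm_entry' Off_diag)

lemma nbt_sym:
  fixes I :: "'n::linorder set"
  assumes "b \<in> I" "c \<notin> I"
  shows "nbt (insert c (I - {b})) c b = nbt I b c"
proof -
  have "{k \<in> insert c (I - {b}). c < k \<and> k < b \<or> b < k \<and> k < c} = {k\<in>I. b < k \<and> k < c \<or> c < k \<and> k < b}"
    using assms by auto
  then show ?thesis unfolding nbt_def by simp
qed

lemma swap_iff:
  fixes I :: "'n set"
  assumes hb: "b \<in> I" and hc: "c \<notin> I" and hb': "b' \<in> insert c (I - {b})" and hc': "c' \<notin> insert c (I - {b})"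
  shows "I = insert c' (insert c (I - {b}) - {b'}) \<longleftrightarrow> b' = c \<and> c' = b"
proof
  assume e: "I = insert c' (insert c (I - {b}) - {b'})"
  have "b' = c"
  proof (rule ccontr)
    assume "b' \<noteq> c"
    then have "c \<in> insert c' (insert c (I - {b}) - {b'})" by auto
    then show False using e hc by blast
  qed
  moreover have "c' = b"
  proof (rule ccontr)
    assume "c' \<noteq> b"
    have "c' \<in> I" using e by auto
    then show False using hc' \<open>c' \<noteq> b\<close> by auto
  qed
  ultimately show "b' = c \<and> c' = b" by simp
next
  assume "b' = c \<and> c' = b"
  then show "I = insert c' (insert c (I - {b}) - {b'})" using hb hc by auto
qed

lemma Off_back:
  fixes I :: "'n::{finite,linorder} set"
  assumes b: "b \<in> I" and c: "c \<notin> I"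
  shows "Off B (insert c (I - {b})) I = B b c * (-1) ^ nbt I b c"
proof -
  define K where "K = insert c (I - {b})"
  have "Off B K I = (\<Sum>b'\<in>K. \<Sum>c'\<in>-K. if b' = c \<and> c' = b then B c' b' * (-1) ^ nbt K b' c' else 0)"
    unfolding Off_def
    by (intro sum.cong refl) (use swap_iff[OF b c] in \<open>auto simp: K_def\<close>)
  also have "\<dots> = (\<Sum>b'\<in>K. if b' = c then B b b' * (-1) ^ nbt K b' b else 0)"
  proof (intro sum.cong refl)
    fix b' assume "b' \<in> K"
    have bK: "b \<in> -K" using b c by (auto simp: K_def)
    show "(\<Sum>c'\<in>-K. if b' = c \<and> c' = b then B c' b' * (-1) ^ nbt K b' c' else 0)
        = (if b' = c then B b b' * (-1) ^ nbt K b' b else 0)"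
      using bK by (cases "b' = c") (simp_all add: sum.delta')
  qed
  also have "\<dots> = B b c * (-1) ^ nbt K c b" by (simp add: K_def)
  finally show ?thesis using nbt_sym[OF b c] by (simp add: K_def)
qed

lemma card_ins: 
  fixes I :: "'n::finite set"
  assumes "b \<in> I" "c \<notin> I"
  shows "card (insert c (I - {b})) = card I"
  using assms by (simp add: card_Diff_singleton) (metis card_Diff1_less card_gt_0_iff empty_iff finite Suc_pred)


lemma mult_if0: "(if P then (x::real) else 0) * y = (if P then x * y else 0)" by simp

lemma Off_prod:
  fixes I :: "'n::{finite,linorder} set"
  assumes I: "I \<in> psubsets p"
  shows "(\<Sum>J\<in>psubsets p. Off A I J * Off B J I) = (\<Sum>b\<in>I. \<Sum>c\<in>-I. A c b * B b c)"
proof -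
  have "(\<Sum>J\<in>psubsets p. Off A I J * Off B J I)
     = (\<Sum>J\<in>psubsets p. \<Sum>b\<in>I. \<Sum>c\<in>-I. if J = insert c (I - {b}) then A c b * (-1) ^ nbt I b c * Off B J I else 0)"
    unfolding Off_def sum_distrib_right mult_if0 by simp
  also have "\<dots> = (\<Sum>b\<in>I. \<Sum>J\<in>psubsets p. \<Sum>c\<in>-I. if J = insert c (I - {b}) then A c b * (-1) ^ nbt I b c * Off B J I else 0)"
    by (rule sum.swap)
  also have "\<dots> = (\<Sum>b\<in>I. \<Sum>c\<in>-I. \<Sum>J\<in>psubsets p. if J = insert c (I - {b}) then A c b * (-1) ^ nbt I b c * Off B J I else 0)"
    by (intro sum.cong refl sum.swap)
  also have "\<dots> = (\<Sum>b\<in>I. \<Sum>c\<in>-I. A c b * B b c)"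
  proof (intro sum.cong refl)
    fix b c assume b: "b \<in> I" and c: "c \<in> -I"
    have mem: "insert c (I - {b}) \<in> psubsets p"
      using card_ins[of b I c] b c I by (auto simp: psubsets_def)
    have sq: "((-1::real) ^ nbt I b c) * (-1) ^ nbt I b c = 1"
      by (simp add: power_mult_distrib[symmetric])
    show "(\<Sum>J\<in>psubsets p. if J = insert c (I - {b}) then A c b * (-1) ^ nbt I b c * Off B J I else 0) = A c b * B b c"
      using mem Off_back[of b I c B] b c sq by (simp add: sum.delta' algebra_simps)
  qed
  finally show ?thesis .
qed


definition DI :: "nat \<Rightarrow> ('n::{finite,linorder} \<Rightarrow> 'n \<Rightarrow> real) \<Rightarrow> real \<Rightarrow> 'n fmat" where
  "DI p A a = (\<lambda>I J. Dm p A I J + a * mId I J)"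

lemma DI_entry:
  fixes I :: "'n::{finite,linorder} set"
  assumes "I \<in> psubsets p"
  shows "DI p A a I J = (if J = I then dg A I + a else 0) + Off A I J"
  using Dm_entry'[OF assms, of A J] by (simp add: DI_def mId_def)

lemma mtrace_DI: "mtrace p (DI p A a) = (\<Sum>I\<in>psubsets p. dg A (I::'n::{finite,linorder} set)) + a * real (card (psubsets p :: 'n set set))"
  unfolding mtrace_def by (simp add: DI_entry Off_diag sum.distrib)

lemma mtrace_DIDI:
  "mtrace p (mmult p (DI p A a) (DI p B b)) =
    (\<Sum>I\<in>psubsets p. (dg A I + a) * (dg B (I::'n::{finite,linorder} set) + b))
    + (\<Sum>I\<in>psubsets p. \<Sum>x\<in>I. \<Sum>y\<in>-I. A y x * B x y)"
proof -
  have "mmult p (DI p A a) (DI p B b) I I = (dg A I + a) * (dg B I + b) + (\<Sum>x\<in>I. \<Sum>y\<in>-I. A y x * B x y)"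
    if I: "I \<in> psubsets p" for I
  proof -
    have "mmult p (DI p A a) (DI p B b) I I = (\<Sum>K\<in>psubsets p.
        (if K = I then (dg A I + a) * (dg B I + b) else 0) + Off A I K * Off B K I)"
      unfolding mmult_def
    proof (intro sum.cong refl)
      fix K :: "'n set" assume K: "K \<in> psubsets p"
      show "DI p A a I K * DI p B b K I = (if K = I then (dg A I + a) * (dg B I + b) else 0) + Off A I K * Off B K I"
        using DI_entry[OF I, of A a K] DI_entry[OF K, of B b I] by (cases "K = I") (auto simp: Off_diag)
    qed
    also have "\<dots> = (dg A I + a) * (dg B I + b) + (\<Sum>x\<in>I. \<Sum>y\<in>-I. A y x * B x y)"
      using I by (simp add: sum.distrib Off_prod)
    finally show ?thesis .
  qed
  then show ?thesis unfolding mtrace_def by (simp add: sum.distrib)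
qed


lemma card_xy:
  fixes x y :: "'n::finite"
  assumes xy: "x \<noteq> y"
  shows "real (card {I \<in> psubsets p. x \<in> I \<and> y \<notin> I}) = binom_int (int CARD('n) - 2) (int p - 1)"
proof (cases "p = 0")
  case True
  have "{I \<in> psubsets p. x \<in> I \<and> y \<notin> I} = {}" using True by (auto simp: psubsets_def)
  then show ?thesis using True by (simp add: binom_int_def)
next
  case False
  have n2: "CARD('n) \<ge> 2"
  proof -
    have "card {x, y} \<le> CARD('n)" by (rule card_mono) auto
    then show ?thesis using xy by simp
  qed
  have e: "{I \<in> psubsets p. x \<in> I \<and> y \<notin> I} = insert x ` {K. K \<subseteq> UNIV - {x, y} \<and> card K = p - 1}"
  proof (rule set_eqI, rule iffI)
    fix I assume "I \<in> {I \<in> psubsets p. x \<in> I \<and> y \<notin> I}"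
    then have I: "card I = p" "x \<in> I" "y \<notin> I" by (auto simp: psubsets_def)
    then have "I - {x} \<in> {K. K \<subseteq> UNIV - {x, y} \<and> card K = p - 1}" by auto
    moreover have "I = insert x (I - {x})" using I by auto
    ultimately show "I \<in> insert x ` {K. K \<subseteq> UNIV - {x, y} \<and> card K = p - 1}" by blast
  next
    fix I assume "I \<in> insert x ` {K. K \<subseteq> UNIV - {x, y} \<and> card K = p - 1}"
    then obtain K where K: "K \<subseteq> UNIV - {x, y}" "card K = p - 1" "I = insert x K" by auto
    have "x \<notin> K" using K by auto
    then have "card I = p" using K False by (simp add: card_insert_if)
    then show "I \<in> {I \<in> psubsets p. x \<in> I \<and> y \<notin> I}" using K xy by (auto simp: psubsets_def)
  qed
  have inj: "inj_on (insert x) {K. K \<subseteq> UNIV - {x, y} \<and> card K = p - 1}"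
    by (rule inj_onI) (metis Diff_insert_absorb Diff_iff mem_Collect_eq subsetD insertCI)
  have "card {I \<in> psubsets p. x \<in> I \<and> y \<notin> I} = card {K. K \<subseteq> UNIV - {x, y} \<and> card K = p - 1}"
    unfolding e by (rule card_image[OF inj])
  also have "\<dots> = card (UNIV - {x, y} :: 'n set) choose (p - 1)" by (rule n_subsets) simp
  also have "card (UNIV - {x, y} :: 'n set) = CARD('n) - 2" using xy by (simp add: card_Diff_subset)
  finally have c: "card {I \<in> psubsets p. x \<in> I \<and> y \<notin> I} = (CARD('n) - 2) choose (p - 1)" .
  have "binom_int (int CARD('n) - 2) (int p - 1) = real (CARD('n) - 2) gchoose (p - 1)"
    using False n2 by (simp add: binom_int_def of_nat_diff nat_diff_distrib)
  then show ?thesis unfolding c by (simp add: binomial_gbinomial)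
qed

lemma count_off:
  fixes f :: "'n::finite \<Rightarrow> 'n \<Rightarrow> real"
  shows "(\<Sum>I\<in>psubsets p. \<Sum>x\<in>I. \<Sum>y\<in>-I. f x y) =
   (\<Sum>x\<in>UNIV. \<Sum>y\<in>UNIV. if x = y then 0 else binom_int (int CARD('n::finite) - 2) (int p - 1) * f x y)"
proof -
  have "(\<Sum>I\<in>psubsets p. \<Sum>x\<in>I. \<Sum>y\<in>-I. f x y)
      = (\<Sum>I\<in>psubsets p. \<Sum>x\<in>UNIV. \<Sum>y\<in>UNIV. if x \<in> I \<and> y \<notin> I then f x y else 0)"
  proof (rule sum.cong[OF refl])
    fix I :: "'n set"
    have "(\<Sum>x\<in>UNIV. \<Sum>y\<in>UNIV. if x \<in> I \<and> y \<notin> I then f x y else 0)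
        = (\<Sum>x\<in>UNIV. if x \<in> I then (\<Sum>y\<in>-I. f x y) else 0)"
      by (intro sum.cong refl) (simp add: sum.If_cases Compl_eq_Diff_UNIV[symmetric] Compl_eq)
    also have "\<dots> = (\<Sum>x\<in>I. \<Sum>y\<in>-I. f x y)" by (simp add: sum.If_cases)
    finally show "(\<Sum>x\<in>I. \<Sum>y\<in>-I. f x y) = (\<Sum>x\<in>UNIV. \<Sum>y\<in>UNIV. if x \<in> I \<and> y \<notin> I then f x y else 0)" by simp
  qed
  also have "\<dots> = (\<Sum>x\<in>UNIV. \<Sum>I\<in>psubsets p. \<Sum>y\<in>UNIV. if x \<in> I \<and> y \<notin> I then f x y else 0)"
    by (rule sum.swap)
  also have "\<dots> = (\<Sum>x\<in>UNIV. \<Sum>y\<in>UNIV. \<Sum>I\<in>psubsets p. if x \<in> I \<and> y \<notin> I then f x y else 0)"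
    by (intro sum.cong refl sum.swap)
  also have "\<dots> = (\<Sum>x\<in>UNIV. \<Sum>y\<in>UNIV. if x = y then 0 else binom_int (int CARD('n::finite) - 2) (int p - 1) * f x y)"
  proof (intro sum.cong refl)
    fix x y :: 'n
    have "(\<Sum>I\<in>psubsets p. if x \<in> I \<and> y \<notin> I then f x y else 0)
        = real (card {I \<in> psubsets p. x \<in> I \<and> y \<notin> I}) * f x y"
      by (simp add: sum.If_cases Int_def)
    then show "(\<Sum>I\<in>psubsets p. if x \<in> I \<and> y \<notin> I then f x y else 0)
        = (if x = y then 0 else binom_int (int CARD('n::finite) - 2) (int p - 1) * f x y)"
      using card_xy[of x y p] by auto
  qed
  finally show ?thesis .
qed


lemma Gm_scale: "Gm (\<lambda>k i j. \<alpha> * g k i j) c a b = \<alpha> * Gm g c a b"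
  by (simp add: Gm_def algebra_simps)

lemma comp_sorted: "comp (unitform J) (sorted_list_of_set (I::'n::{finite,linorder} set)) = mId I J"
  using sl_facts[of I] inversions_sorted[of "sorted_list_of_set I"]
  by (auto simp: Defs.comp_def unitform_def mId_def)

lemma sum_if_P: "(\<Sum>x\<in>A. if P then f x else 0) = (if P then sum f A else (0::real))"
  by (cases P) simp_all

lemma deriv_lin: "deriv (\<lambda>\<alpha>::real. C + \<alpha> * K) 0 = K"
proof -
  have "((\<lambda>\<alpha>::real. C + \<alpha> * K) has_real_derivative K) (at 0)"
    by (auto intro!: derivative_eq_intros)
  then show ?thesis by (rule DERIV_imp_deriv)
qed

lemma sigma1c_eq:
  fixes H :: "'n::{finite,linorder} \<Rightarrow> 'n \<Rightarrow> real"
  shows "sigma1c p G2 H k l I J =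
    2 * Dm p (\<lambda>c b. Gm (\<lambda>m i j. if m = k then H i j else 0) c l b) I J
    + (\<Sum>a\<in>UNIV. Gm (\<lambda>m i j. if m = k then H i j else 0) l a a) * mId I J"
proof -
  define g where "g = (\<lambda>m i j. if m = k then H i j else (0::real))"
  define u1 where "u1 = (\<lambda>m. if m = l then unitform J else (\<lambda>_::'n set. 0::real))"
  define K where "K = 2 * (\<Sum>a\<in>UNIV. \<Sum>r<p. \<Sum>c\<in>UNIV. Gm g c a (sorted_list_of_set I ! r) *
        comp (u1 a) ((sorted_list_of_set I)[r:=c]))
    + (\<Sum>a\<in>UNIV. \<Sum>c\<in>UNIV. Gm g c a a * comp (u1 c) (sorted_list_of_set I))"
  have f: "(\<lambda>\<alpha>. bochner p (\<lambda>i j. delta i j + \<alpha> * 0) (\<lambda>k i j. 0 + \<alpha> * g k i j)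
            (\<lambda>e k i j. G2 e k i j + \<alpha> * 0) (\<lambda>_. 0) u1 (\<lambda>_ _ _. 0) I) = (\<lambda>\<alpha>. 0 + \<alpha> * K)"
  proof
    fix \<alpha> :: real
    have e1: "(\<lambda>i j. delta i j + \<alpha> * 0) = delta" by simp
    have e2: "(\<lambda>e k i j. G2 e k i j + \<alpha> * 0) = G2" by simp
    show "bochner p (\<lambda>i j. delta i j + \<alpha> * 0) (\<lambda>k i j. 0 + \<alpha> * g k i j)
            (\<lambda>e k i j. G2 e k i j + \<alpha> * 0) (\<lambda>_. 0) u1 (\<lambda>_ _ _. 0) I = 0 + \<alpha> * K"
      unfolding e1 e2 using bochner_u0[of p "\<lambda>k i j. \<alpha> * g k i j" G2 u1 I]
      by (simp add: Gm_scale K_def sum_distrib_left algebra_simps)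
  qed
  have "sigma1c p G2 H k l I J = K"
    unfolding sigma1c_def bochner_var_def g_def[symmetric] u1_def[symmetric] f deriv_lin ..
  also have "K = 2 * Dm p (\<lambda>c b. Gm g c l b) I J + (\<Sum>a\<in>UNIV. Gm g l a a) * mId I J"
  proof -
    have c1: "comp (u1 a) xs = (if a = l then comp (unitform J) xs else 0)" for a xs
      by (simp add: u1_def)
    show ?thesis unfolding K_def c1 Dm_def comp_sorted
      by (simp add: if_distrib[of "\<lambda>x. _ * x"] sum_if_P sum.delta' sum_distrib_right cong: if_cong)
  qed
  finally show ?thesis by (simp add: g_def)
qed


lemma delta_mult: "delta a b * (x::real) = (if a = b then x else 0)"
  by (simp add: delta_def)

lemma if0_div: "(if P then (x::real) else 0) / y = (if P then x / y else 0)"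
  by simp

lemma bochner_g10:
  fixes g2 :: "'n::{finite,linorder} \<Rightarrow> 'n \<Rightarrow> 'n \<Rightarrow> 'n \<Rightarrow> real" and I :: "'n set"
  shows "bochner p delta (\<lambda>_ _ _. 0) g2 u0 (\<lambda>_ _. 0) (\<lambda>_ _ _. 0) I =
    (\<Sum>a\<in>UNIV. \<Sum>r<p. \<Sum>c\<in>UNIV. Gm (g2 a) c a (sorted_list_of_set I ! r) * comp u0 ((sorted_list_of_set I)[r:=c]))"
  unfolding bochner_def Let_def minv_delta
  by (simp add: Gm_def sum_negf sum.distrib sum_subtractf sum_distrib_left delta_mult if0_div sum_if_P sum.delta)

lemma Gm_add: "Gm (\<lambda>k i j. f k i j + \<alpha> * g k i j) c a b = Gm f c a b + \<alpha> * Gm g c a b"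
  by (simp add: Gm_def field_simps)

lemma sigma0_eq:
  fixes H :: "'n::{finite,linorder} \<Rightarrow> 'n \<Rightarrow> real"
  shows "sigma0 p G2 H \<xi> I J = Dm p (\<lambda>c b. \<Sum>a\<in>UNIV. Gm (\<lambda>k i j. \<xi> a * \<xi> k * H i j) c a b) I J"
proof -
  define C0 where "C0 = (\<Sum>a\<in>UNIV. \<Sum>r<p. \<Sum>c\<in>UNIV. Gm (G2 a) c a (sorted_list_of_set I ! r) * comp (unitform J) ((sorted_list_of_set I)[r:=c]))"
  define C1 where "C1 = (\<Sum>a\<in>UNIV. \<Sum>r<p. \<Sum>c\<in>UNIV. Gm (\<lambda>k i j. \<xi> a * \<xi> k * H i j) c a (sorted_list_of_set I ! r) * comp (unitform J) ((sorted_list_of_set I)[r:=c]))"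
  have f: "(\<lambda>\<alpha>. bochner p (\<lambda>i j. delta i j + \<alpha> * 0) (\<lambda>k i j. 0 + \<alpha> * 0)
            (\<lambda>e k i j. G2 e k i j + \<alpha> * (\<xi> e * \<xi> k * H i j)) (unitform J) (\<lambda>_ _. 0) (\<lambda>_ _ _. 0) I) = (\<lambda>\<alpha>. C0 + \<alpha> * C1)"
  proof
    fix \<alpha> :: real
    have e1: "(\<lambda>i j. delta i j + \<alpha> * 0) = delta" by simp
    have e2: "(\<lambda>k i j. 0 + \<alpha> * 0) = (\<lambda>_ _ _. 0::real)" by simp
    show "bochner p (\<lambda>i j. delta i j + \<alpha> * 0) (\<lambda>k i j. 0 + \<alpha> * 0)
            (\<lambda>e k i j. G2 e k i j + \<alpha> * (\<xi> e * \<xi> k * H i j)) (unitform J) (\<lambda>_ _. 0) (\<lambda>_ _ _. 0) I = C0 + \<alpha> * C1"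
      unfolding e1 e2 bochner_g10 Gm_add
      by (simp add: C0_def C1_def sum_distrib_left sum.distrib algebra_simps)
  qed
  have "sigma0 p G2 H \<xi> I J = C1"
    unfolding sigma0_def bochner_var_def f deriv_lin ..
  also have "C1 = Dm p (\<lambda>c b. \<Sum>a\<in>UNIV. Gm (\<lambda>k i j. \<xi> a * \<xi> k * H i j) c a b) I J"
    unfolding C1_def Dm_def
    by (simp add: sum_distrib_right) (subst sum.swap, rule sum.cong[OF refl], rule sum.swap)
  finally show ?thesis .
qed


lemma Dm_sum: "Dm p (\<lambda>c b. \<Sum>i\<in>S. f i c b) I J = (\<Sum>i\<in>S. Dm p (f i) I J)"
proof -
  define F where "F i r c = f i c (sorted_list_of_set I ! r) * comp (unitform J) ((sorted_list_of_set I)[r := c])" for i r c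
  have "(\<Sum>i\<in>S. \<Sum>r<p. \<Sum>c\<in>UNIV. F i r c) = (\<Sum>r<p. \<Sum>i\<in>S. \<Sum>c\<in>UNIV. F i r c)" by (rule sum.swap)
  also have "\<dots> = (\<Sum>r<p. \<Sum>c\<in>UNIV. \<Sum>i\<in>S. F i r c)" by (intro sum.cong refl) (rule sum.swap)
  finally show ?thesis unfolding Dm_def sum_distrib_right F_def by simp
qed

lemma Dm_scale: "Dm p (\<lambda>c b. x * f c b) I J = x * Dm p f I J"
  unfolding Dm_def sum_distrib_left by (simp add: algebra_simps)

lemma Dm_cong: "(\<And>c b. f c b = g c b) \<Longrightarrow> Dm p f I J = Dm p g I J"
  by (simp add: Dm_def)

lemma A1_closed:
  fixes H :: "'n::finite \<Rightarrow> 'n \<Rightarrow> real"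
  assumes Hs: "\<And>i j. H i j = H j i"
  shows "(\<Sum>k\<in>UNIV. \<Sum>l\<in>UNIV. \<xi> k * \<xi> l * (2 * Gm (\<lambda>m i j. if m = k then H i j else 0) c l b))
    = nsq \<xi> * H c b + hdot H \<xi> c * \<xi> b - \<xi> c * hdot H \<xi> b"
proof -
  have pw: "\<xi> k * \<xi> l * (2 * Gm (\<lambda>m i j. if m = k then H i j else 0) c l b)
     = (if l = k then \<xi> k * \<xi> k * H c b else 0) + (if b = k then \<xi> b * \<xi> l * H c l else 0)
       - (if c = k then \<xi> c * \<xi> l * H l b else 0)" for k l
    by (simp add: Gm_def field_simps)
  have "(\<Sum>k\<in>UNIV. \<Sum>l\<in>UNIV. \<xi> k * \<xi> l * (2 * Gm (\<lambda>m i j. if m = k then H i j else 0) c l b))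
     = (\<Sum>k\<in>UNIV. \<xi> k * \<xi> k * H c b) + (\<Sum>l\<in>UNIV. \<xi> b * \<xi> l * H c l) - (\<Sum>l\<in>UNIV. \<xi> c * \<xi> l * H l b)"
    unfolding pw sum.distrib sum_subtractf by (simp add: sum.delta sum.delta' sum_if_P)
  also have "\<dots> = nsq \<xi> * H c b + hdot H \<xi> c * \<xi> b - \<xi> c * hdot H \<xi> b"
    by (simp add: nsq_def hdot_def sum_distrib_left sum_distrib_right power2_eq_square algebra_simps Hs)
  finally show ?thesis .
qed


lemma gamma_closed:
  fixes H :: "'n::finite \<Rightarrow> 'n \<Rightarrow> real"
  shows "(\<Sum>a\<in>UNIV. Gm (\<lambda>m i j. if m = k then H i j else 0) l a a) = H l k - (if l = k then mtr H / 2 else 0)"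
proof -
  have pw: "Gm (\<lambda>m i j. if m = k then H i j else 0) l a a
     = (if a = k then H l a else 0) - (if l = k then H a a / 2 else 0)" for a
    by (simp add: Gm_def field_simps)
  show ?thesis unfolding pw sum_subtractf by (simp add: sum.delta' sum_if_P mtr_def sum_divide_distrib)
qed

lemma B_closed:
  fixes H :: "'n::finite \<Rightarrow> 'n \<Rightarrow> real"
  assumes Hs: "\<And>i j. H i j = H j i"
  shows "(\<Sum>i\<in>UNIV. \<xi> i * (2 * Gm (\<lambda>m i' j'. if m = i then H i' j' else 0) c j b))
    = \<xi> j * H c b + \<xi> b * H c j - \<xi> c * H j b"
proof -
  have pw: "\<xi> i * (2 * Gm (\<lambda>m i' j'. if m = i then H i' j' else 0) c j b)
     = (if j = i then \<xi> j * H c b else 0) + (if b = i then \<xi> b * H c j else 0)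
       - (if c = i then \<xi> c * H j b else 0)" for i
    by (simp add: Gm_def field_simps)
  show ?thesis unfolding pw sum.distrib sum_subtractf by (simp add: sum.delta sum.delta')
qed

lemma D0_closed:
  fixes H :: "'n::finite \<Rightarrow> 'n \<Rightarrow> real"
  assumes Hs: "\<And>i j. H i j = H j i"
  shows "(\<Sum>a\<in>UNIV. Gm (\<lambda>k i j. \<xi> a * \<xi> k * H i j) c a b)
    = (nsq \<xi> * H c b + hdot H \<xi> c * \<xi> b - \<xi> c * hdot H \<xi> b) / 2"
proof -
  have pw: "Gm (\<lambda>k i j. \<xi> a * \<xi> k * H i j) c a b
     = (\<xi> a * \<xi> a * H c b + \<xi> b * (H c a * \<xi> a) - \<xi> c * (H b a * \<xi> a)) / 2" for a
    by (simp add: Gm_def algebra_simps Hs[of a b])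
  show ?thesis unfolding pw sum_divide_distrib[symmetric] sum.distrib sum_subtractf
    by (simp add: nsq_def hdot_def sum_distrib_left[symmetric] power2_eq_square sum_distrib_right[symmetric] mult.commute)
qed


lemma sigma1_DI:
  fixes H :: "'n::{finite,linorder} \<Rightarrow> 'n \<Rightarrow> real"
  assumes Hs: "\<And>i j. H i j = H j i"
  shows "sigma1 p G2 H \<xi> = DI p (\<lambda>c b. nsq \<xi> * H c b + hdot H \<xi> c * \<xi> b - \<xi> c * hdot H \<xi> b)
                                 (xhx H \<xi> - nsq \<xi> * mtr H / 2)"
proof (rule ext, rule ext)
  fix I J
  define G where "G k = (\<lambda>m i j. if m = k then H i j else (0::real))" for k :: 'n
  have "sigma1 p G2 H \<xi> I J = (\<Sum>k\<in>UNIV. \<Sum>l\<in>UNIV. Dm p (\<lambda>c b. \<xi> k * \<xi> l * (2 * Gm (G k) c l b)) I J)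
      + (\<Sum>k\<in>UNIV. \<Sum>l\<in>UNIV. \<xi> k * \<xi> l * (\<Sum>a\<in>UNIV. Gm (G k) l a a)) * mId I J"
    unfolding sigma1_def sigma1c_eq G_def[symmetric] Dm_scale
    by (simp add: sum_distrib_right sum_distrib_left sum.distrib algebra_simps)
  also have "(\<Sum>k\<in>UNIV. \<Sum>l\<in>UNIV. Dm p (\<lambda>c b. \<xi> k * \<xi> l * (2 * Gm (G k) c l b)) I J)
      = Dm p (\<lambda>c b. nsq \<xi> * H c b + hdot H \<xi> c * \<xi> b - \<xi> c * hdot H \<xi> b) I J"
    unfolding Dm_sum[symmetric] G_def using A1_closed[where H=H, OF Hs] by (intro Dm_cong) simp
  also have "(\<Sum>k\<in>UNIV. \<Sum>l\<in>UNIV. \<xi> k * \<xi> l * (\<Sum>a\<in>UNIV. Gm (G k) l a a)) = xhx H \<xi> - nsq \<xi> * mtr H / 2"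
  proof -
    have "(\<Sum>k\<in>UNIV. \<Sum>l\<in>UNIV. \<xi> k * \<xi> l * (\<Sum>a\<in>UNIV. Gm (G k) l a a))
        = (\<Sum>k\<in>UNIV. \<Sum>l\<in>UNIV. H l k * \<xi> l * \<xi> k) - (\<Sum>k\<in>UNIV. \<xi> k * \<xi> k * (mtr H / 2))"
      unfolding G_def gamma_closed by (simp add: right_diff_distrib sum_subtractf sum.delta algebra_simps if_distrib[of "\<lambda>x. _ * x"] cong: if_cong)
    also have "\<dots> = xhx H \<xi> - nsq \<xi> * mtr H / 2"
      unfolding xhx_def nsq_def by (subst sum.swap) (simp add: sum_distrib_right power2_eq_square)
    finally show ?thesis .
  qed
  finally show "sigma1 p G2 H \<xi> I J = DI p (\<lambda>c b. nsq \<xi> * H c b + hdot H \<xi> c * \<xi> b - \<xi> c * hdot H \<xi> b)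
                                 (xhx H \<xi> - nsq \<xi> * mtr H / 2) I J" by (simp add: DI_def)
qed


lemma sigma0_DI:
  fixes H :: "'n::{finite,linorder} \<Rightarrow> 'n \<Rightarrow> real"
  assumes Hs: "\<And>i j. H i j = H j i"
  shows "sigma0 p G2 H \<xi> = DI p (\<lambda>c b. (nsq \<xi> * H c b + hdot H \<xi> c * \<xi> b - \<xi> c * hdot H \<xi> b) / 2) 0"
proof (intro ext)
  fix I J
  have "sigma0 p G2 H \<xi> I J = Dm p (\<lambda>c b. (nsq \<xi> * H c b + hdot H \<xi> c * \<xi> b - \<xi> c * hdot H \<xi> b) / 2) I J"
    by (rule trans[OF sigma0_eq], rule Dm_cong, rule D0_closed[where H=H, OF Hs])
  then show "sigma0 p G2 H \<xi> I J = DI p (\<lambda>c b. (nsq \<xi> * H c b + hdot H \<xi> c * \<xi> b - \<xi> c * hdot H \<xi> b) / 2) 0 I J"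
    by (simp add: DI_def)
qed

lemma q_alt: "xhx H \<xi> = (\<Sum>i\<in>UNIV. \<xi> i * hdot H \<xi> i)"
  unfolding xhx_def hdot_def by (simp add: sum_distrib_left algebra_simps)

lemma V_DI:
  fixes H :: "'n::{finite,linorder} \<Rightarrow> 'n \<Rightarrow> real"
  assumes Hs: "\<And>i j. H i j = H j i"
  shows "(\<lambda>I J. \<Sum>i\<in>UNIV. \<xi> i * sigma1c p G2 H i j I J) =
     DI p (\<lambda>c b. \<xi> j * H c b + \<xi> b * H c j - \<xi> c * H j b) (hdot H \<xi> j - \<xi> j * mtr H / 2)"
proof (rule ext, rule ext)
  fix I J
  define G where "G k = (\<lambda>m i j. if m = k then H i j else (0::real))" for k :: 'n
  have "(\<Sum>i\<in>UNIV. \<xi> i * sigma1c p G2 H i j I J) = (\<Sum>i\<in>UNIV. Dm p (\<lambda>c b. \<xi> i * (2 * Gm (G i) c j b)) I J)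
      + (\<Sum>i\<in>UNIV. \<xi> i * (\<Sum>a\<in>UNIV. Gm (G i) j a a)) * mId I J"
    unfolding sigma1c_eq G_def[symmetric] Dm_scale
    by (simp add: sum_distrib_right sum_distrib_left sum.distrib algebra_simps)
  also have "(\<Sum>i\<in>UNIV. Dm p (\<lambda>c b. \<xi> i * (2 * Gm (G i) c j b)) I J)
      = Dm p (\<lambda>c b. \<xi> j * H c b + \<xi> b * H c j - \<xi> c * H j b) I J"
    unfolding Dm_sum[symmetric] G_def using B_closed[where H=H, OF Hs] by (intro Dm_cong) simp
  also have "(\<Sum>i\<in>UNIV. \<xi> i * (\<Sum>a\<in>UNIV. Gm (G i) j a a)) = hdot H \<xi> j - \<xi> j * mtr H / 2"
    unfolding G_def gamma_closed
    by (simp add: right_diff_distrib sum_subtractf sum.delta hdot_def algebra_simps if_distrib[of "\<lambda>x. _ * x"] cong: if_cong)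
  finally show "(\<Sum>i\<in>UNIV. \<xi> i * sigma1c p G2 H i j I J) =
     DI p (\<lambda>c b. \<xi> j * H c b + \<xi> b * H c j - \<xi> c * H j b) (hdot H \<xi> j - \<xi> j * mtr H / 2) I J"
    by (simp add: DI_def)
qed

lemma T_DI:
  fixes H :: "'n::{finite,linorder} \<Rightarrow> 'n \<Rightarrow> real" and \<xi> :: "'n \<Rightarrow> real"
  assumes Hs: "\<And>i j. H i j = H j i"
  defines "w \<equiv> (\<lambda>i j. \<xi> i * hdot H \<xi> j + \<xi> j * hdot H \<xi> i)"
  shows "(\<lambda>I J. \<Sum>i\<in>UNIV. \<Sum>j\<in>UNIV. sigma1c p G2 H i j I J * w i j) =
     DI p (\<lambda>c b. \<Sum>i\<in>UNIV. \<Sum>j\<in>UNIV. w i j * (2 * Gm (\<lambda>m i' j'. if m = i then H i' j' else 0) c j b))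
          (2 * nsq (hdot H \<xi>) - mtr H * xhx H \<xi>)"
proof (rule ext, rule ext)
  fix I J
  define G where "G k = (\<lambda>m i j. if m = k then H i j else (0::real))" for k :: 'n
  have "(\<Sum>i\<in>UNIV. \<Sum>j\<in>UNIV. sigma1c p G2 H i j I J * w i j) =
      (\<Sum>i\<in>UNIV. \<Sum>j\<in>UNIV. Dm p (\<lambda>c b. w i j * (2 * Gm (G i) c j b)) I J)
      + (\<Sum>i\<in>UNIV. \<Sum>j\<in>UNIV. w i j * (\<Sum>a\<in>UNIV. Gm (G i) j a a)) * mId I J"
    unfolding sigma1c_eq G_def[symmetric] Dm_scale
    by (simp add: sum_distrib_right sum_distrib_left sum.distrib algebra_simps)
  also have "(\<Sum>i\<in>UNIV. \<Sum>j\<in>UNIV. Dm p (\<lambda>c b. w i j * (2 * Gm (G i) c j b)) I J)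
      = Dm p (\<lambda>c b. \<Sum>i\<in>UNIV. \<Sum>j\<in>UNIV. w i j * (2 * Gm (G i) c j b)) I J"
    unfolding Dm_sum ..
  also have "(\<Sum>i\<in>UNIV. \<Sum>j\<in>UNIV. w i j * (\<Sum>a\<in>UNIV. Gm (G i) j a a)) = 2 * nsq (hdot H \<xi>) - mtr H * xhx H \<xi>"
  proof -
    have "(\<Sum>i\<in>UNIV. \<Sum>j\<in>UNIV. w i j * (\<Sum>a\<in>UNIV. Gm (G i) j a a))
       = (\<Sum>i\<in>UNIV. \<Sum>j\<in>UNIV. w i j * H j i) - (\<Sum>i\<in>UNIV. w i i * (mtr H / 2))"
      unfolding G_def gamma_closed
      by (simp add: right_diff_distrib sum_subtractf sum.delta if_distrib[of "\<lambda>x. _ * x"] cong: if_cong)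
    also have "(\<Sum>i\<in>UNIV. w i i * (mtr H / 2)) = mtr H * xhx H \<xi>"
      unfolding w_def q_alt by (simp add: sum_distrib_left sum_distrib_right algebra_simps)
    also have "(\<Sum>i\<in>UNIV. \<Sum>j\<in>UNIV. w i j * H j i) = 2 * nsq (hdot H \<xi>)"
    proof -
      have "(\<Sum>i\<in>UNIV. \<Sum>j\<in>UNIV. w i j * H j i)
          = (\<Sum>i\<in>UNIV. \<Sum>j\<in>UNIV. hdot H \<xi> j * (H j i * \<xi> i)) + (\<Sum>i\<in>UNIV. \<Sum>j\<in>UNIV. hdot H \<xi> i * (H i j * \<xi> j))"
        unfolding w_def by (simp add: sum.distrib algebra_simps Hs)
      also have "(\<Sum>i\<in>UNIV. \<Sum>j\<in>UNIV. hdot H \<xi> j * (H j i * \<xi> i)) = (\<Sum>j\<in>UNIV. \<Sum>i\<in>UNIV. hdot H \<xi> j * (H j i * \<xi> i))"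
        by (rule sum.swap)
      moreover have e: "\<And>j. (\<Sum>i\<in>UNIV. H j i * \<xi> i) = hdot H \<xi> j" by (simp add: hdot_def)
      ultimately show ?thesis
        by (simp add: sum_distrib_left[symmetric] nsq_def power2_eq_square e)
    qed
    finally show ?thesis .
  qed
  finally show "(\<Sum>i\<in>UNIV. \<Sum>j\<in>UNIV. sigma1c p G2 H i j I J * w i j) =
     DI p (\<lambda>c b. \<Sum>i\<in>UNIV. \<Sum>j\<in>UNIV. w i j * (2 * Gm (\<lambda>m i' j'. if m = i then H i' j' else 0) c j b))
          (2 * nsq (hdot H \<xi>) - mtr H * xhx H \<xi>) I J"
    by (simp add: DI_def G_def)
qed

lemma AT_diag:
  fixes H :: "'n::finite \<Rightarrow> 'n \<Rightarrow> real"
  assumes Hs: "\<And>i j. H i j = H j i"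
  shows "(\<Sum>i\<in>UNIV. \<Sum>j\<in>UNIV. (\<xi> i * hdot H \<xi> j + \<xi> j * hdot H \<xi> i) *
           (2 * Gm (\<lambda>m i' j'. if m = i then H i' j' else 0) b j b)) = 2 * xhx H \<xi> * H b b"
proof -
  have pw: "2 * Gm (\<lambda>m i' j'. if m = i then H i' j' else 0) b j b = (if j = i then H b b else 0)" for i j
    using Hs by (auto simp: Gm_def)
  show ?thesis unfolding pw q_alt
    by (simp add: if_distrib[of "\<lambda>x. _ * x"] sum.delta' sum_distrib_right cong: if_cong)
      (simp add: sum_distrib_left algebra_simps)
qed


lemma F1:
  fixes H :: "'n::finite \<Rightarrow> 'n \<Rightarrow> real" and \<xi> :: "'n \<Rightarrow> real"
  assumes Hs: "\<And>i j. H i j = H j i"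
  defines "hx \<equiv> hdot H \<xi>" and "m \<equiv> nsq \<xi>"
  shows "(\<Sum>b\<in>UNIV. \<Sum>c\<in>UNIV. (m * H c b + hx c * \<xi> b - \<xi> c * hx b) * (m * H b c + hx b * \<xi> c - \<xi> b * hx c))
    = m * m * (\<Sum>b\<in>UNIV. \<Sum>c\<in>UNIV. H b c * H b c) + 2 * (xhx H \<xi>)^2 - 2 * m * nsq hx"
proof -
  have pw: "(m * H c b + hx c * \<xi> b - \<xi> c * hx b) * (m * H b c + hx b * \<xi> c - \<xi> b * hx c)
    = m * m * (H b c * H b c) + 2 * ((\<xi> b * hx b) * (\<xi> c * hx c)) - (\<xi> c * \<xi> c) * (hx b * hx b) - (\<xi> b * \<xi> b) * (hx c * hx c)" for b c
    using Hs[of c b] by (simp add: algebra_simps)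
  have q: "xhx H \<xi> = (\<Sum>b\<in>UNIV. \<xi> b * hx b)" unfolding hx_def by (rule q_alt)
  have S1: "(\<Sum>b\<in>UNIV. \<Sum>c\<in>UNIV. m * m * (H b c * H b c)) = m * m * (\<Sum>b\<in>UNIV. \<Sum>c\<in>UNIV. H b c * H b c)"
    by (simp add: sum_distrib_left)
  have S2: "(\<Sum>b\<in>UNIV. \<Sum>c\<in>UNIV. 2 * ((\<xi> b * hx b) * (\<xi> c * hx c))) = 2 * (xhx H \<xi>)^2"
    unfolding q power2_eq_square sum_product by (simp add: sum_distrib_left)
  have S3: "(\<Sum>b\<in>UNIV. \<Sum>c\<in>UNIV. (\<xi> c * \<xi> c) * (hx b * hx b)) = m * nsq hx"
    unfolding m_def nsq_def power2_eq_square sum_product by (subst sum.swap) simp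
  have S4: "(\<Sum>b\<in>UNIV. \<Sum>c\<in>UNIV. (\<xi> b * \<xi> b) * (hx c * hx c)) = m * nsq hx"
    unfolding m_def nsq_def power2_eq_square sum_product by simp
  show ?thesis unfolding pw sum.distrib sum_subtractf S1 S2 S3 S4 by simp
qed


lemma F2:
  fixes H :: "'n::finite \<Rightarrow> 'n \<Rightarrow> real" and \<xi> :: "'n \<Rightarrow> real"
  assumes Hs: "\<And>i j. H i j = H j i"
  shows "(\<Sum>j\<in>UNIV. \<Sum>b\<in>UNIV. \<Sum>c\<in>UNIV. (\<xi> j * H c b + \<xi> b * H c j - \<xi> c * H j b) * (\<xi> j * H b c + \<xi> c * H b j - \<xi> b * H j c))
    = 2 * nsq (hdot H \<xi>) - nsq \<xi> * (\<Sum>b\<in>UNIV. \<Sum>c\<in>UNIV. H b c * H b c)"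
proof -
  define u where "u = (\<Sum>b\<in>UNIV. \<Sum>c\<in>UNIV. H b c * H b c)"
  have pw: "(\<xi> j * H c b + \<xi> b * H c j - \<xi> c * H j b) * (\<xi> j * H b c + \<xi> c * H b j - \<xi> b * H j c)
    = (\<xi> j * \<xi> j) * (H b c * H b c) + 2 * ((\<xi> b * H b j) * (\<xi> c * H c j)) - (\<xi> b * \<xi> b) * (H c j * H c j) - (\<xi> c * \<xi> c) * (H b j * H b j)" for j b c
    using Hs[of c b] Hs[of j b] Hs[of j c] by (simp add: algebra_simps)
  have u2: "(\<Sum>j\<in>UNIV. \<Sum>c\<in>UNIV. H c j * H c j) = u" unfolding u_def by (rule sum.swap)
  have hx: "hdot H \<xi> j = (\<Sum>b\<in>UNIV. \<xi> b * H b j)" for j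
    unfolding hdot_def using Hs by (simp add: mult.commute)
  have T1: "(\<Sum>j\<in>UNIV. \<Sum>b\<in>UNIV. \<Sum>c\<in>UNIV. (\<xi> j * \<xi> j) * (H b c * H b c)) = nsq \<xi> * u"
  proof -
    have "(\<Sum>j\<in>UNIV. \<Sum>b\<in>UNIV. \<Sum>c\<in>UNIV. (\<xi> j * \<xi> j) * (H b c * H b c)) = (\<Sum>j\<in>UNIV. (\<xi> j * \<xi> j) * u)"
      unfolding u_def by (simp add: sum_distrib_left)
    also have "\<dots> = nsq \<xi> * u" unfolding nsq_def power2_eq_square by (simp add: sum_distrib_right)
    finally show ?thesis .
  qed
  have T2: "(\<Sum>j\<in>UNIV. \<Sum>b\<in>UNIV. \<Sum>c\<in>UNIV. 2 * ((\<xi> b * H b j) * (\<xi> c * H c j))) = 2 * nsq (hdot H \<xi>)"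
    unfolding nsq_def power2_eq_square hx sum_product by (simp add: sum_distrib_left)
  have T3: "(\<Sum>j\<in>UNIV. \<Sum>b\<in>UNIV. \<Sum>c\<in>UNIV. (\<xi> b * \<xi> b) * (H c j * H c j)) = nsq \<xi> * u"
  proof -
    have "(\<Sum>j\<in>UNIV. \<Sum>b\<in>UNIV. \<Sum>c\<in>UNIV. (\<xi> b * \<xi> b) * (H c j * H c j))
        = (\<Sum>j\<in>UNIV. (\<Sum>b\<in>UNIV. \<xi> b * \<xi> b) * (\<Sum>c\<in>UNIV. H c j * H c j))"
      by (simp add: sum_product)
    also have "\<dots> = nsq \<xi> * u" unfolding u2[symmetric] nsq_def power2_eq_square by (simp add: sum_distrib_left)
    finally show ?thesis .
  qed
  have T4: "(\<Sum>j\<in>UNIV. \<Sum>b\<in>UNIV. \<Sum>c\<in>UNIV. (\<xi> c * \<xi> c) * (H b j * H b j)) = nsq \<xi> * u"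
  proof -
    have "(\<Sum>j\<in>UNIV. \<Sum>b\<in>UNIV. \<Sum>c\<in>UNIV. (\<xi> c * \<xi> c) * (H b j * H b j))
        = (\<Sum>j\<in>UNIV. (\<Sum>b\<in>UNIV. H b j * H b j) * (\<Sum>c\<in>UNIV. \<xi> c * \<xi> c))"
      unfolding sum_product by (intro sum.cong refl) (simp add: mult.commute)
    also have "\<dots> = (\<Sum>j\<in>UNIV. \<Sum>b\<in>UNIV. H b j * H b j) * (\<Sum>c\<in>UNIV. \<xi> c * \<xi> c)"
      by (simp add: sum_distrib_right)
    also have "\<dots> = nsq \<xi> * u" using u2 unfolding nsq_def power2_eq_square by (simp add: mult.commute)
    finally show ?thesis .
  qed
  show ?thesis unfolding pw sum.distrib sum_subtractf T1 T2 T3 T4 u_def by simp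
qed


lemma HP_entry:
  fixes H :: "'n::finite \<Rightarrow> 'n \<Rightarrow> real"
  shows "smul H (proj_perp \<xi>) i k = H i k - hdot H \<xi> i * \<xi> k / nsq \<xi>"
proof -
  have "smul H (proj_perp \<xi>) i k = (\<Sum>j\<in>UNIV. H i j * delta j k) - (\<Sum>j\<in>UNIV. H i j * \<xi> j) * \<xi> k / nsq \<xi>"
    unfolding smul_def proj_perp_def by (simp add: right_diff_distrib sum_subtractf sum_distrib_right sum_divide_distrib mult.assoc)
  also have "(\<Sum>j\<in>UNIV. H i j * delta j k) = H i k" by (simp add: delta_def if_distrib[of "\<lambda>x. _ * x"] cong: if_cong)
  finally show ?thesis by (simp add: hdot_def)
qed

lemma mtr_HP:
  fixes H :: "'n::finite \<Rightarrow> 'n \<Rightarrow> real"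
  shows "mtr (smul H (proj_perp \<xi>)) = mtr H - xhx H \<xi> / nsq \<xi>"
  unfolding mtr_def HP_entry q_alt sum_subtractf
  by (simp add: sum_divide_distrib mult.commute)

lemma mtr_HPHP:
  fixes H :: "'n::finite \<Rightarrow> 'n \<Rightarrow> real"
  assumes Hs: "\<And>i j. H i j = H j i" and m0: "nsq \<xi> \<noteq> 0"
  shows "mtr (smul (smul H (proj_perp \<xi>)) (smul H (proj_perp \<xi>)))
    = (\<Sum>b\<in>UNIV. \<Sum>c\<in>UNIV. H b c * H b c) - 2 * nsq (hdot H \<xi>) / nsq \<xi> + (xhx H \<xi>)^2 / (nsq \<xi>)^2"
proof -
  define m where "m = nsq \<xi>"
  define hx where "hx = hdot H \<xi>"
  have pw: "(H i k - hx i * \<xi> k / m) * (H k i - hx k * \<xi> i / m)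
     = H i k * H i k - (hx i * (H i k * \<xi> k)) / m - (hx k * (H k i * \<xi> i)) / m
       + ((\<xi> i * hx i) * (\<xi> k * hx k)) / (m * m)" for i k
    using Hs[of k i] m0 by (simp add: m_def field_simps)
  have e: "(\<Sum>k\<in>UNIV. H i k * \<xi> k) = hx i" for i by (simp add: hx_def hdot_def)
  have W1: "(\<Sum>i\<in>UNIV. \<Sum>k\<in>UNIV. (hx i * (H i k * \<xi> k)) / m) = nsq hx / m"
    by (simp add: sum_divide_distrib[symmetric] sum_distrib_left[symmetric] e nsq_def power2_eq_square)
  have W2: "(\<Sum>i\<in>UNIV. \<Sum>k\<in>UNIV. (hx k * (H k i * \<xi> i)) / m) = nsq hx / m"
    by (subst sum.swap) (simp add: sum_divide_distrib[symmetric] sum_distrib_left[symmetric] e nsq_def power2_eq_square)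
  have W3: "(\<Sum>i\<in>UNIV. \<Sum>k\<in>UNIV. ((\<xi> i * hx i) * (\<xi> k * hx k)) / (m * m)) = (xhx H \<xi>)^2 / m^2"
    unfolding q_alt hx_def[symmetric] power2_eq_square sum_product
    by (simp add: sum_divide_distrib)
  show ?thesis
    unfolding smul_def[of "smul H (proj_perp \<xi>)"] mtr_def HP_entry m_def[symmetric] hx_def[symmetric] pw
      sum.distrib sum_subtractf W1 W2 W3 by simp
qed


lemma mtrace_fadd: "mtrace p (fadd X Y) = mtrace p X + mtrace p (Y::'n::finite fmat)"
  by (simp add: mtrace_def fadd_def sum.distrib)

lemma mtrace_fscale: "mtrace p (fscale c X) = c * mtrace p (X::'n::finite fmat)"
  by (simp add: mtrace_def fscale_def sum_distrib_left)

lemma mtrace_sumj: "mtrace p (\<lambda>I J. \<Sum>j\<in>S. F j I J) = (\<Sum>j\<in>S. mtrace p (F j :: 'n::finite fmat))"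
  unfolding mtrace_def by (rule sum.swap)

lemma card_ps: "card (psubsets p :: 'n::finite set set) = CARD('n) choose p"
proof -
  have "psubsets p = {B. B \<subseteq> (UNIV::'n set) \<and> card B = p}" by (auto simp: psubsets_def)
  then show ?thesis using n_subsets[of "UNIV::'n set" p] by simp
qed

lemma sum_offdiag: "(\<Sum>x\<in>UNIV. \<Sum>y\<in>UNIV. if x = y then 0 else G x y) =
   (\<Sum>x\<in>UNIV. \<Sum>y\<in>UNIV. G x y) - (\<Sum>x\<in>UNIV. G x (x::'n::finite) :: real)"
proof -
  have "(\<Sum>y\<in>UNIV. if x = y then 0 else G x y) = (\<Sum>y\<in>UNIV. G x y) - G x x" for x
  proof -
    have "(\<Sum>y\<in>UNIV. G x y) = (\<Sum>y\<in>UNIV. if x = y then 0 else G x y) + (\<Sum>y\<in>UNIV. if x = y then G x y else 0)"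
      by (subst sum.distrib[symmetric]) (intro sum.cong refl, simp)
    then show ?thesis by (simp add: sum.delta)
  qed
  then show ?thesis by (simp add: sum_subtractf)
qed

lemma diagQ2:
  fixes d :: "'a \<Rightarrow> real" and \<xi> \<beta> :: "'n::finite \<Rightarrow> real"
  assumes f: "finite S" and h1: "(\<Sum>j\<in>UNIV. \<xi> j * \<xi> j) = m" and h2: "(\<Sum>j\<in>UNIV. \<xi> j * \<beta> j) = a"
  shows "(\<Sum>I\<in>S. (m * d I + a) * (m * d I + a)) - m * (\<Sum>j\<in>UNIV. \<Sum>I\<in>S. (\<xi> j * d I + \<beta> j) * (\<xi> j * d I + \<beta> j))
     = real (card S) * (a * a - m * (\<Sum>j\<in>UNIV. \<beta> j * \<beta> j))"
proof -
  have e: "(\<Sum>j\<in>UNIV. (\<xi> j * d I + \<beta> j) * (\<xi> j * d I + \<beta> j))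
      = d I * d I * (\<Sum>j\<in>UNIV. \<xi> j * \<xi> j) + 2 * d I * (\<Sum>j\<in>UNIV. \<xi> j * \<beta> j) + (\<Sum>j\<in>UNIV. \<beta> j * \<beta> j)" for I
    by (simp add: sum.distrib sum_distrib_left algebra_simps)
  have "(\<Sum>j\<in>UNIV. \<Sum>I\<in>S. (\<xi> j * d I + \<beta> j) * (\<xi> j * d I + \<beta> j))
      = (\<Sum>I\<in>S. \<Sum>j\<in>UNIV. (\<xi> j * d I + \<beta> j) * (\<xi> j * d I + \<beta> j))" by (rule sum.swap)
  also have "\<dots> = (\<Sum>I\<in>S. d I * d I * m + 2 * d I * a + (\<Sum>j\<in>UNIV. \<beta> j * \<beta> j))"
    unfolding e h1 h2 ..
  finally have "m * (\<Sum>j\<in>UNIV. \<Sum>I\<in>S. (\<xi> j * d I + \<beta> j) * (\<xi> j * d I + \<beta> j))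
      = (\<Sum>I\<in>S. m * (d I * d I * m + 2 * d I * a + (\<Sum>j\<in>UNIV. \<beta> j * \<beta> j)))"
    by (simp add: sum_distrib_left)
  then have "(\<Sum>I\<in>S. (m * d I + a) * (m * d I + a)) - m * (\<Sum>j\<in>UNIV. \<Sum>I\<in>S. (\<xi> j * d I + \<beta> j) * (\<xi> j * d I + \<beta> j))
      = (\<Sum>I\<in>S. (m * d I + a) * (m * d I + a) - m * (d I * d I * m + 2 * d I * a + (\<Sum>j\<in>UNIV. \<beta> j * \<beta> j)))"
    by (simp add: sum_subtractf)
  also have "\<dots> = (\<Sum>I\<in>S. a * a - m * (\<Sum>j\<in>UNIV. \<beta> j * \<beta> j))"
    by (intro sum.cong refl) (simp add: algebra_simps)
  finally show ?thesis by simp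
qed

lemma nsq_pos: "\<xi> \<noteq> (\<lambda>_. 0) \<Longrightarrow> nsq (\<xi>::'n::finite \<Rightarrow> real) > 0"
proof -
  assume "\<xi> \<noteq> (\<lambda>_. 0)"
  then obtain i where i: "\<xi> i \<noteq> 0" by auto
  have "0 < \<xi> i ^ 2" using i by simp
  also have "\<dots> \<le> nsq \<xi>" unfolding nsq_def by (rule member_le_sum) auto
  finally show ?thesis .
qed


theorem lemma5p1:
  fixes p :: nat and s :: real
    and G2 :: "'n::{finite,linorder} \<Rightarrow> 'n \<Rightarrow> 'n \<Rightarrow> 'n \<Rightarrow> real"
    and H :: "'n \<Rightarrow> 'n \<Rightarrow> real" and \<xi> :: "'n \<Rightarrow> real"
  assumes "normal_2jet G2"
    and "\<And>i j. H i j = H j i"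
    and "\<xi> \<noteq> (\<lambda>_. 0)"
  defines "n \<equiv> real CARD('n)"
    and "S \<equiv> s - real CARD('n) / 2"
    and "HP \<equiv> smul H (proj_perp \<xi>)"
  shows "Q1 p s G2 H \<xi> =
           (S^2 - 1/4) * vnorm \<xi> powr (n - 2 * s) * real (CARD('n) choose p) * (mtr HP)^2 \<and>
         Q2 p s G2 H \<xi> =
           (S - 1/2) * vnorm \<xi> powr (n - 2 * s) * 4 * binom_int (int CARD('n) - 2) (int p - 1)
              * mtr (smul HP HP)
           + (S - 1/2) * vnorm \<xi> powr (n - 2 * s - 4) * real (CARD('n) choose p)
              * (- 2 * nsq \<xi> * nsq (hdot H \<xi>) + 2 * (xhx H \<xi>)^2) \<and>
         Q3 p s G2 H \<xi> =
           (S - 1/2) * vnorm \<xi> powr (n - 2 * s) * real (CARD('n) choose p) * (mtr HP)^2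
           + (S - 1/2) * vnorm \<xi> powr (n - 2 * s - 4) * real (CARD('n) choose p)
              * (4 * nsq \<xi> * nsq (hdot H \<xi>) - 3 * (xhx H \<xi>)^2
                 - nsq \<xi> * xhx H \<xi> * mtr H)"
proof -
  have Hs: "\<And>i j. H i j = H j i" by (rule assms(2))
  define m where "m = nsq \<xi>"
  define q where "q = xhx H \<xi>"
  define t where "t = mtr H"
  define hx where "hx = hdot H \<xi>"
  define w where "w = nsq hx"
  define u where "u = (\<Sum>b\<in>UNIV. \<Sum>c\<in>UNIV. H b c * H b c)"
  define N where "N = real (CARD('n) choose p)"
  define L where "L = (\<Sum>I\<in>psubsets p. dg H (I::'n set))"
  define \<kappa> where "\<kappa> = binom_int (int CARD('n) - 2) (int p - 1)"
  define E where "E = vnorm \<xi> powr (n - 2 * s - 4)"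
  have m0: "m > 0" unfolding m_def using assms(3) by (rule nsq_pos)
  have vn: "vnorm \<xi> = sqrt m" by (simp add: vnorm_def m_def)
  have pw: "vnorm \<xi> powr (n - 2 * s) = E * m^2"
  proof -
    have "vnorm \<xi> powr (n - 2 * s) = vnorm \<xi> powr ((n - 2 * s - 4) + 4)" by simp
    also have "\<dots> = E * vnorm \<xi> powr 4" unfolding E_def by (rule powr_add)
    also have "vnorm \<xi> powr 4 = m^2"
    proof -
      have "vnorm \<xi> powr 4 = sqrt m ^ 4" using m0 vn by simp
      also have "sqrt m ^ 4 = (sqrt m ^ 2) ^ 2" by (simp flip: power_mult)
      also have "\<dots> = m^2" using m0 by simp
      finally show ?thesis .
    qed
    finally show ?thesis .
  qed
  have NN: "real (card (psubsets p :: 'n set set)) = N" by (simp add: N_def card_ps)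
  define A1 where "A1 = (\<lambda>c b. m * H c b + hx c * \<xi> b - \<xi> c * hx b)"
  define a1 where "a1 = q - m * t / 2"
  have s1: "sigma1 p G2 H \<xi> = DI p A1 a1"
    unfolding A1_def a1_def m_def hx_def q_def t_def by (rule sigma1_DI[OF Hs])
  have s0: "sigma0 p G2 H \<xi> = DI p (\<lambda>c b. A1 c b / 2) 0"
    unfolding A1_def m_def hx_def by (rule sigma0_DI[OF Hs])
  have dA1: "dg A1 I = m * dg H I" for I by (simp add: dg_def A1_def sum_distrib_left)
  have dA2: "dg (\<lambda>c b. A1 c b / 2) I = m / 2 * dg H I" for I by (simp add: dg_def A1_def sum_distrib_left)
  have tr_s1: "mtrace p (sigma1 p G2 H \<xi>) = m * L + a1 * N"
    unfolding s1 mtrace_DI dA1 NN L_def by (simp add: sum_distrib_left)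
  have tr_s0: "mtrace p (sigma0 p G2 H \<xi>) = m / 2 * L"
    unfolding s0 mtrace_DI dA2 L_def by (simp add: sum_distrib_left)
  have Q1: "Q1 p s G2 H \<xi> = (S^2 - 1/4) * vnorm \<xi> powr (n - 2 * s) * real (CARD('n) choose p) * (mtr HP)^2"
  proof -
    have Dh: "Dm p (\<lambda>c b. A1 c b / 2) I J = Dm p A1 I J / 2" for I J
    proof -
      have "Dm p (\<lambda>c b. A1 c b / 2) I J = Dm p (\<lambda>c b. (1/2) * A1 c b) I J" by (rule Dm_cong) simp
      also have "\<dots> = (1/2) * Dm p A1 I J" by (rule Dm_scale)
      finally show ?thesis by simp
    qed
    have D0: "Dm p (\<lambda>_ _. 0) I J = 0" for I J by (simp add: Dm_def)
    have X: "fadd (fadd (sigma2 H \<xi>) (fscale (-2) (sigma1 p G2 H \<xi>))) (fscale 4 (sigma0 p G2 H \<xi>))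
        = DI p (\<lambda>_ _. 0) (m * t - q)"
      unfolding s1 s0 sigma2_def by (intro ext) (simp add: fadd_def fscale_def DI_def Dh D0 a1_def q_def algebra_simps)
    have d0: "dg (\<lambda>_ _. 0) I = 0" for I by (simp add: dg_def)
    have "mtrace p (mmult p (DI p (\<lambda>_::'n. \<lambda>_::'n. 0::real) (m * t - q)) (DI p (\<lambda>_ _. 0) (m * t - q))) = N * (m * t - q)^2"
      unfolding mtrace_DIDI d0 by (simp add: NN power2_eq_square)
    then have "Q1 p s G2 H \<xi> = (S^2 - 1/4) * E * (N * (m * t - q)^2)"
      unfolding Q1_def Let_def X by (simp add: S_def E_def n_def)
    also have "\<dots> = (S^2 - 1/4) * (E * m^2) * N * (t - q / m)^2"
      using m0 by (simp add: field_simps power2_eq_square)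
    finally show ?thesis unfolding pw HP_def mtr_HP N_def t_def q_def m_def .
  qed
  have sq: "(E * m^2) * (t - q / m)^2 = E * (m * t - q)^2"
    using m0 by (simp add: field_simps power2_eq_square)
  have Q3: "Q3 p s G2 H \<xi> =
           (S - 1/2) * vnorm \<xi> powr (n - 2 * s) * real (CARD('n) choose p) * (mtr HP)^2
           + (S - 1/2) * vnorm \<xi> powr (n - 2 * s - 4) * real (CARD('n) choose p)
              * (4 * nsq \<xi> * nsq (hdot H \<xi>) - 3 * (xhx H \<xi>)^2
                 - nsq \<xi> * xhx H \<xi> * mtr H)"
  proof -
    define AT where "AT = (\<lambda>c b. \<Sum>i\<in>UNIV. \<Sum>j\<in>UNIV. (\<xi> i * hdot H \<xi> j + \<xi> j * hdot H \<xi> i) *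
           (2 * Gm (\<lambda>m i' j'. if m = i then H i' j' else 0) c j b))"
    have T: "(\<lambda>I J. \<Sum>i\<in>UNIV. \<Sum>j\<in>UNIV. sigma1c p G2 H i j I J * (\<xi> i * hdot H \<xi> j + \<xi> j * hdot H \<xi> i))
        = DI p AT (2 * w - t * q)"
      unfolding AT_def w_def hx_def t_def q_def by (rule T_DI[OF Hs])
    have dAT: "dg AT I = 2 * q * dg H I" for I
      unfolding dg_def AT_def AT_diag[where H=H, OF Hs] q_def by (simp add: sum_distrib_left)
    have trT: "mtrace p (DI p AT (2 * w - t * q)) = 2 * q * L + (2 * w - t * q) * N"
      unfolding mtrace_DI dAT NN L_def by (simp add: sum_distrib_left)
    have "Q3 p s G2 H \<xi> = (2 * S - 1) * E * (q * (- (m * L + a1 * N) - 2 * (m / 2 * L))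
        + m * t * (- (m * L + a1 * N) + 2 * (m / 2 * L)) + m * (2 * q * L + (2 * w - t * q) * N))"
      unfolding Q3_def Let_def T mtrace_fadd mtrace_fscale tr_s1 tr_s0 trT
      by (simp add: S_def E_def n_def m_def q_def t_def hx_def)
    also have "\<dots> = (S - 1/2) * (E * (m * t - q)^2) * N + (S - 1/2) * E * N * (4 * m * w - 3 * q^2 - m * q * t)"
      unfolding a1_def by (simp add: field_simps power2_eq_square)
    also have "\<dots> = (S - 1/2) * ((E * m^2) * (t - q / m)^2) * N + (S - 1/2) * E * N * (4 * m * w - 3 * q^2 - m * q * t)"
      unfolding sq ..
    also have "\<dots> = (S - 1/2) * vnorm \<xi> powr (n - 2 * s) * real (CARD('n) choose p) * (mtr HP)^2
           + (S - 1/2) * vnorm \<xi> powr (n - 2 * s - 4) * real (CARD('n) choose p)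
              * (4 * nsq \<xi> * nsq (hdot H \<xi>) - 3 * (xhx H \<xi>)^2
                 - nsq \<xi> * xhx H \<xi> * mtr H)"
      unfolding pw HP_def mtr_HP E_def[symmetric] N_def[symmetric] hx_def[symmetric] w_def[symmetric]
        m_def[symmetric] q_def[symmetric] t_def[symmetric]
      by (simp add: algebra_simps)
    finally show ?thesis .
  qed
  have Q2: "Q2 p s G2 H \<xi> =
           (S - 1/2) * vnorm \<xi> powr (n - 2 * s) * 4 * binom_int (int CARD('n) - 2) (int p - 1)
              * mtr (smul HP HP)
           + (S - 1/2) * vnorm \<xi> powr (n - 2 * s - 4) * real (CARD('n) choose p)
              * (- 2 * nsq \<xi> * nsq (hdot H \<xi>) + 2 * (xhx H \<xi>)^2)"
  proof -
    define B where "B j = (\<lambda>c b. \<xi> j * H c b + \<xi> b * H c j - \<xi> c * H j b)" for j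
    define \<beta> where "\<beta> j = hx j - \<xi> j * t / 2" for j
    define d where "d I = dg H I" for I
    have V: "(\<lambda>I J. \<Sum>i\<in>UNIV. \<xi> i * sigma1c p G2 H i j I J) = DI p (B j) (\<beta> j)" for j
      unfolding B_def \<beta>_def hx_def t_def by (rule V_DI[OF Hs])
    have dB: "dg (B j) I = \<xi> j * d I" for j I
      unfolding dg_def B_def d_def by (simp add: sum_distrib_left Hs[of j])
    have off1: "(\<Sum>I\<in>psubsets p. \<Sum>x\<in>I. \<Sum>y\<in>-I. A1 y x * A1 x y)
        = \<kappa> * (\<Sum>x\<in>UNIV. \<Sum>y\<in>UNIV. A1 y x * A1 x y) - \<kappa> * (\<Sum>x\<in>UNIV. A1 x x * A1 x x)"
      unfolding count_off sum_offdiag \<kappa>_def by (simp add: sum_distrib_left)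
    have offj: "(\<Sum>I\<in>psubsets p. \<Sum>x\<in>I. \<Sum>y\<in>-I. B j y x * B j x y)
        = \<kappa> * (\<Sum>x\<in>UNIV. \<Sum>y\<in>UNIV. B j y x * B j x y) - \<kappa> * (\<Sum>x\<in>UNIV. B j x x * B j x x)" for j
      unfolding count_off sum_offdiag \<kappa>_def by (simp add: sum_distrib_left)
    have tr1: "mtrace p (mmult p (sigma1 p G2 H \<xi>) (sigma1 p G2 H \<xi>))
        = (\<Sum>I\<in>psubsets p. (m * d I + a1) * (m * d I + a1))
          + (\<kappa> * (\<Sum>x\<in>UNIV. \<Sum>y\<in>UNIV. A1 y x * A1 x y) - \<kappa> * (\<Sum>x\<in>UNIV. A1 x x * A1 x x))"
      unfolding s1 mtrace_DIDI dA1 off1 d_def ..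
    have trj: "mtrace p (mmult p (DI p (B j) (\<beta> j)) (DI p (B j) (\<beta> j)))
        = (\<Sum>I\<in>psubsets p. (\<xi> j * d I + \<beta> j) * (\<xi> j * d I + \<beta> j))
          + (\<kappa> * (\<Sum>x\<in>UNIV. \<Sum>y\<in>UNIV. B j y x * B j x y) - \<kappa> * (\<Sum>x\<in>UNIV. B j x x * B j x x))" for j
      unfolding mtrace_DIDI dB offj ..
    have diag: "(\<Sum>I\<in>psubsets p. (m * d I + a1) * (m * d I + a1))
        - m * (\<Sum>j\<in>UNIV. \<Sum>I\<in>psubsets p. (\<xi> j * d I + \<beta> j) * (\<xi> j * d I + \<beta> j))
        = N * (q^2 - m * w)"
    proof -
      have h1: "(\<Sum>j\<in>UNIV. \<xi> j * \<xi> j) = m" by (simp add: m_def nsq_def power2_eq_square)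
      have h2: "(\<Sum>j\<in>UNIV. \<xi> j * \<beta> j) = a1"
        unfolding \<beta>_def a1_def q_def q_alt hx_def[symmetric] m_def nsq_def
        by (simp add: right_diff_distrib sum_subtractf sum_distrib_right power2_eq_square algebra_simps) (simp add: sum_divide_distrib[symmetric] sum_distrib_left sum_distrib_right mult.commute)
      have h3: "(\<Sum>j\<in>UNIV. \<beta> j * \<beta> j) = w - t * q + m * t * t / 4"
        unfolding \<beta>_def w_def q_def q_alt hx_def[symmetric] m_def nsq_def
        by (simp add: algebra_simps sum_subtractf sum.distrib sum_distrib_left sum_distrib_right power2_eq_square sum_divide_distrib)
      have e: "(\<Sum>I\<in>psubsets p. (m * d I + a1) * (m * d I + a1))
        - m * (\<Sum>j\<in>UNIV. \<Sum>I\<in>psubsets p. (\<xi> j * d I + \<beta> j) * (\<xi> j * d I + \<beta> j))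
        = real (card (psubsets p :: 'n set set)) * (a1 * a1 - m * (\<Sum>j\<in>UNIV. \<beta> j * \<beta> j))"
        by (rule diagQ2[OF finite_ps h1 h2])
      show ?thesis unfolding e unfolding NN h3 a1_def
        by (simp add: algebra_simps power2_eq_square)
    qed
    have dzero: "(\<Sum>x\<in>UNIV. A1 x x * A1 x x) - m * (\<Sum>j\<in>UNIV. \<Sum>x\<in>UNIV. B j x x * B j x x) = 0"
    proof -
      have "(\<Sum>j\<in>UNIV. \<Sum>x\<in>UNIV. B j x x * B j x x) = (\<Sum>j\<in>UNIV. \<xi> j * \<xi> j * (\<Sum>x\<in>UNIV. H x x * H x x))"
        unfolding B_def using Hs by (simp add: sum_distrib_left algebra_simps)
      also have "\<dots> = m * (\<Sum>x\<in>UNIV. H x x * H x x)"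
        by (simp add: sum_distrib_right m_def nsq_def power2_eq_square)
      finally show ?thesis unfolding A1_def by (simp add: sum_distrib_left algebra_simps)
    qed
    have F1': "(\<Sum>x\<in>UNIV. \<Sum>y\<in>UNIV. A1 y x * A1 x y) = m * m * u + 2 * q^2 - 2 * m * w"
      unfolding A1_def m_def hx_def u_def q_def w_def by (rule F1[OF Hs])
    have F2': "(\<Sum>j\<in>UNIV. \<Sum>x\<in>UNIV. \<Sum>y\<in>UNIV. B j y x * B j x y) = 2 * w - m * u"
      unfolding B_def m_def hx_def u_def w_def by (rule F2[OF Hs])
    have "Q2 p s G2 H \<xi> = (2 * S - 1) * E * (mtrace p (mmult p (sigma1 p G2 H \<xi>) (sigma1 p G2 H \<xi>))
         - m * (\<Sum>j\<in>UNIV. mtrace p (mmult p (DI p (B j) (\<beta> j)) (DI p (B j) (\<beta> j)))))"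
      unfolding Q2_def Let_def mtrace_fadd mtrace_fscale mtrace_sumj V
      by (simp add: S_def E_def n_def m_def)
    also have "\<dots> = (2 * S - 1) * E * (N * (q^2 - m * w) + \<kappa> * (2 * m * m * u - 4 * m * w + 2 * q^2))"
    proof -
      have "mtrace p (mmult p (sigma1 p G2 H \<xi>) (sigma1 p G2 H \<xi>))
         - m * (\<Sum>j\<in>UNIV. mtrace p (mmult p (DI p (B j) (\<beta> j)) (DI p (B j) (\<beta> j))))
         = ((\<Sum>I\<in>psubsets p. (m * d I + a1) * (m * d I + a1))
        - m * (\<Sum>j\<in>UNIV. \<Sum>I\<in>psubsets p. (\<xi> j * d I + \<beta> j) * (\<xi> j * d I + \<beta> j)))
         + \<kappa> * ((\<Sum>x\<in>UNIV. \<Sum>y\<in>UNIV. A1 y x * A1 x y) - m * (\<Sum>j\<in>UNIV. \<Sum>x\<in>UNIV. \<Sum>y\<in>UNIV. B j y x * B j x y))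
         - \<kappa> * ((\<Sum>x\<in>UNIV. A1 x x * A1 x x) - m * (\<Sum>j\<in>UNIV. \<Sum>x\<in>UNIV. B j x x * B j x x))"
        unfolding tr1 trj by (simp add: sum.distrib sum_subtractf sum_distrib_left algebra_simps)
      also have "\<dots> = N * (q^2 - m * w) + \<kappa> * (2 * m * m * u - 4 * m * w + 2 * q^2)"
        unfolding diag dzero F1' F2' by (simp add: algebra_simps)
      finally show ?thesis by simp
    qed
    also have "\<dots> = (S - 1/2) * (E * m^2) * 4 * \<kappa> * (u - 2 * w / m + q^2 / m^2)
        + (S - 1/2) * E * N * (- 2 * m * w + 2 * q^2)"
      using m0 by (simp add: field_simps power2_eq_square)
    also have "\<dots> = (S - 1/2) * vnorm \<xi> powr (n - 2 * s) * 4 * binom_int (int CARD('n) - 2) (int p - 1)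
              * mtr (smul HP HP)
           + (S - 1/2) * vnorm \<xi> powr (n - 2 * s - 4) * real (CARD('n) choose p)
              * (- 2 * nsq \<xi> * nsq (hdot H \<xi>) + 2 * (xhx H \<xi>)^2)"
      unfolding pw HP_def mtr_HPHP[OF Hs m0[unfolded m_def, THEN less_imp_neq, symmetric]]
        E_def[symmetric] N_def[symmetric] \<kappa>_def[symmetric] hx_def[symmetric] w_def[symmetric]
        m_def[symmetric] q_def[symmetric] u_def[symmetric]
      by (simp add: algebra_simps)
    finally show ?thesis .
  qed
  show ?thesis using Q1 Q2 Q3 by blast
qed

end
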